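(* Let $\rho=(r_n)_n$ be an increasing sequence in $[0,1)$ with $r_n\to 1$. For any sequence $(\gamma_k)_k$ of positive real numbers with $\limsup_k\gamma_k^{1/k}\le1$, there exists $f(z)=\sum_{k=0}^\infty a_kz^k$ in $\mathcal{U}_A(\mathbb{D},\rho)$ with $|a_k|\ge\gamma_k$ for every $k$ large enough. In particular, there exist Abel universal functions without Hadamard–Ostrowski gaps.
   Context: $\mathbb{D}$ is the open unit disc, $\mathbb{T}$ the unit circle. For $f\in H(\mathbb{D})$, $f_r(z):=f(rz)$; $\mathcal{U}_A(\mathbb{D},\rho)$ is the set of $f\in H(\mathbb{D})$ such that for every compact $K\subset\mathbb{T}$, $K\neq\mathbb{T}$, and every continuous $\varphi$ on $K$ there is an increasing sequence $(n_k)$ with $\sup_{\zeta\in K}|f_{r_{n_k}}(\zeta)-\varphi(\zeta)|\to0$. Abel universal functions are the elements of $\mathcal{U}_A(\mathbb{D})=\bigcup_\rho\mathcal{U}_A(\mathbb{D},\rho)$. A power series $\sum_k a_kz^k$ with radius of convergence $1$ has Hadamard–Ostrowski gaps if there are sequences $(p_k),(q_k)$ in $\mathbb{N}$ with $1\le p_1<q_1\le p_2<q_2\le\cdots$ and $\inf_k q_k/p_k>1$ such that $\limsup_{k\in I,k\to\infty}|a_k|^{1/k}<1$, where $I=\bigcup_k\{p_k+1,\dots,q_k\}$. *)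

theory Defs
  imports "HOL-Analysis.Analysis" "HOL-Library.Liminf_Limsup"
begin

definition admissible_radii :: "(nat \<Rightarrow> real) \<Rightarrow> bool" where
  "admissible_radii r \<longleftrightarrow> incseq r \<and> (\<forall>n. 0 \<le> r n \<and> r n < 1) \<and> r \<longlonglongrightarrow> 1"

definition abel_universal_rho :: "(nat \<Rightarrow> real) \<Rightarrow> (complex \<Rightarrow> complex) \<Rightarrow> bool" where
  "abel_universal_rho r f \<longleftrightarrow> f holomorphic_on ball 0 1 \<and>
     (\<forall>K \<phi>. compact K \<and> K \<subseteq> sphere 0 1 \<and> K \<noteq> sphere 0 1 \<and> continuous_on K \<phi> \<longrightarrow>
        (\<exists>n::nat \<Rightarrow> nat. strict_mono n \<and>
           uniform_limit K (\<lambda>k \<zeta>. f (complex_of_real (r (n k)) * \<zeta>)) \<phi> sequentially))"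

definition abel_universal :: "(complex \<Rightarrow> complex) \<Rightarrow> bool" where
  "abel_universal f \<longleftrightarrow> (\<exists>r. admissible_radii r \<and> abel_universal_rho r f)"

text \<open>Hadamard-Ostrowski gaps of a coefficient sequence (indices p_1, q_1, ... are shifted to
  start at 0).\<close>
definition has_HO_gaps :: "(nat \<Rightarrow> complex) \<Rightarrow> bool" where
  "has_HO_gaps a \<longleftrightarrow> conv_radius a = 1 \<and>
     (\<exists>p q :: nat \<Rightarrow> nat. 1 \<le> p 0 \<and> (\<forall>k. p k < q k \<and> q k \<le> p (Suc k)) \<and>
        (INF k. real (q k) / real (p k)) > 1 \<and>
        Limsup (inf sequentially (principal (\<Union>k. {p k <.. q k})))
               (\<lambda>k. ereal (root k (norm (a k)))) < 1)"

end

theory Submission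
  imports Defs "HOL-Complex_Analysis.Complex_Analysis" "HOL-Computational_Algebra.Fundamental_Theorem_Algebra"
    "HOL-Library.Countable" "HOL-Library.Nat_Bijection"
begin

definition papprox :: "complex set \<Rightarrow> (complex \<Rightarrow> complex) \<Rightarrow> bool" where
  "papprox S g \<longleftrightarrow> (\<forall>e>0. \<exists>P. \<forall>z\<in>S. cmod (g z - poly P z) < e)"

lemma papprox_poly: "papprox S (poly P)"
  unfolding papprox_def by (auto intro!: exI[of _ P])

lemma papprox_cong: "papprox S g \<Longrightarrow> (\<And>z. z \<in> S \<Longrightarrow> g z = h z) \<Longrightarrow> papprox S h"
  unfolding papprox_def by auto

lemma papprox_const: "papprox S (\<lambda>z. c)"
  by (rule papprox_cong[OF papprox_poly[of S "[:c:]"]]) simp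

lemma papprox_id: "papprox S (\<lambda>z. z)"
  by (rule papprox_cong[OF papprox_poly[of S "[:0,1:]"]]) simp

lemma papprox_limit:
  assumes "\<And>e. e > 0 \<Longrightarrow> \<exists>h. papprox S h \<and> (\<forall>z\<in>S. cmod (g z - h z) \<le> e)"
  shows "papprox S g"
  unfolding papprox_def
proof (intro allI impI)
  fix e :: real assume e: "e > 0"
  obtain h where h: "papprox S h" "\<forall>z\<in>S. cmod (g z - h z) \<le> e/2"
    using assms[of "e/2"] e by auto
  obtain P where P: "\<forall>z\<in>S. cmod (h z - poly P z) < e/2"
    using h(1) e unfolding papprox_def by (meson half_gt_zero)
  have "\<forall>z\<in>S. cmod (g z - poly P z) < e"
  proof
    fix z assume z: "z \<in> S"
    have "cmod (g z - poly P z) \<le> cmod (g z - h z) + cmod (h z - poly P z)"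
      by (metis diff_add_cancel add_diff_eq norm_triangle_ineq diff_diff_eq2)
    also have "\<dots> < e" using h(2) P z by fastforce
    finally show "cmod (g z - poly P z) < e" .
  qed
  then show "\<exists>P. \<forall>z\<in>S. cmod (g z - poly P z) < e" by blast
qed

lemma papprox_subset: "papprox S g \<Longrightarrow> T \<subseteq> S \<Longrightarrow> papprox T g"
  unfolding papprox_def by blast

lemma papprox_add:
  assumes "papprox S g" "papprox S h"
  shows "papprox S (\<lambda>z. g z + h z)"
  unfolding papprox_def
proof (intro allI impI)
  fix e :: real assume e: "e > 0"
  obtain P where P: "\<forall>z\<in>S. cmod (g z - poly P z) < e/2"
    using assms(1) e unfolding papprox_def by (meson half_gt_zero)
  obtain Q where Q: "\<forall>z\<in>S. cmod (h z - poly Q z) < e/2"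
    using assms(2) e unfolding papprox_def by (meson half_gt_zero)
  have "\<forall>z\<in>S. cmod (g z + h z - poly (P + Q) z) < e"
  proof
    fix z assume z: "z \<in> S"
    have "cmod (g z + h z - poly (P + Q) z) = cmod ((g z - poly P z) + (h z - poly Q z))"
      by (simp add: algebra_simps)
    also have "\<dots> \<le> cmod (g z - poly P z) + cmod (h z - poly Q z)" by (rule norm_triangle_ineq)
    also have "\<dots> < e" using P Q z by fastforce
    finally show "cmod (g z + h z - poly (P + Q) z) < e" .
  qed
  then show "\<exists>P. \<forall>z\<in>S. cmod (g z + h z - poly P z) < e" by blast
qed

lemma papprox_bounded:
  assumes "compact S" "papprox S g"
  shows "\<exists>M\<ge>0. \<forall>z\<in>S. cmod (g z) \<le> M"
proof -
  obtain P where P: "\<forall>z\<in>S. cmod (g z - poly P z) < 1"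
    using assms(2) unfolding papprox_def by (meson zero_less_one)
  have "compact (poly P ` S)"
    by (intro compact_continuous_image assms(1)) (auto intro: continuous_intros)
  then obtain B where B: "\<forall>z\<in>S. cmod (poly P z) \<le> B"
    using compact_imp_bounded[of "poly P ` S"] by (auto simp: bounded_iff)
  show ?thesis
  proof (intro exI[of _ "\<bar>B\<bar> + 1"] conjI ballI)
    fix z assume z: "z \<in> S"
    have "cmod (g z) \<le> cmod (g z - poly P z) + cmod (poly P z)"
      by (metis diff_add_cancel norm_triangle_ineq)
    then show "cmod (g z) \<le> \<bar>B\<bar> + 1" using P B z by fastforce
  qed simp
qed

lemma papprox_mult:
  assumes S: "compact S" and g: "papprox S g" and h: "papprox S h"
  shows "papprox S (\<lambda>z. g z * h z)"
  unfolding papprox_def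
proof (intro allI impI)
  fix e :: real assume e: "e > 0"
  obtain M1 where M1: "M1 \<ge> 0" "\<forall>z\<in>S. cmod (g z) \<le> M1" using papprox_bounded[OF S g] by blast
  obtain M2 where M2: "M2 \<ge> 0" "\<forall>z\<in>S. cmod (h z) \<le> M2" using papprox_bounded[OF S h] by blast
  define d where "d = min 1 (e / (M1 + M2 + 2))"
  have d12: "d > 0" "d \<le> 1"
    using e M1 M2 by (auto simp: d_def min_def)
  have "d \<le> e / (M1 + M2 + 2)" by (simp add: d_def)
  then have d3: "d * (M1 + M2 + 2) \<le> e" using M1 M2 by (simp add: pos_le_divide_eq)
  note d = d12 d3
  obtain P where P: "\<forall>z\<in>S. cmod (g z - poly P z) < d"
    using g d unfolding papprox_def by blast
  obtain Q where Q: "\<forall>z\<in>S. cmod (h z - poly Q z) < d"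
    using h d unfolding papprox_def by blast
  have "\<forall>z\<in>S. cmod (g z * h z - poly (P * Q) z) < e"
  proof
    fix z assume z: "z \<in> S"
    have Qb: "cmod (poly Q z) \<le> M2 + 1"
    proof -
      have "cmod (poly Q z) \<le> cmod (h z) + cmod (h z - poly Q z)"
        by (metis add.commute diff_add_cancel diff_diff_eq2 norm_triangle_ineq4 norm_minus_commute)
      then show ?thesis using M2 Q z d by fastforce
    qed
    have "g z * h z - poly (P * Q) z = g z * (h z - poly Q z) + (g z - poly P z) * poly Q z"
      by (simp add: algebra_simps)
    then have "cmod (g z * h z - poly (P * Q) z) \<le> cmod (g z) * cmod (h z - poly Q z) + cmod (g z - poly P z) * cmod (poly Q z)"
      by (metis norm_mult norm_triangle_ineq)
    also have "\<dots> \<le> M1 * d + d * (M2 + 1)"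
      using M1 P Q z Qb d by (intro add_mono mult_mono) (auto intro: less_imp_le)
    also have "\<dots> < d * (M1 + M2 + 2)" using d by (simp add: algebra_simps)
    also have "\<dots> \<le> e" using d by simp
    finally show "cmod (g z * h z - poly (P * Q) z) < e" .
  qed
  then show "\<exists>P. \<forall>z\<in>S. cmod (g z * h z - poly P z) < e" by blast
qed

lemma papprox_cmult: "papprox S g \<Longrightarrow> papprox S (\<lambda>z. c * g z)"
  unfolding papprox_def
proof (intro allI impI)
  fix e :: real assume g: "\<forall>e>0. \<exists>P. \<forall>z\<in>S. cmod (g z - poly P z) < e" and e: "e > 0"
  obtain P where P: "\<forall>z\<in>S. cmod (g z - poly P z) < e / (cmod c + 1)"
    using g e by (meson divide_pos_pos norm_ge_zero add_nonneg_pos zero_less_one)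
  have "\<forall>z\<in>S. cmod (c * g z - poly (smult c P) z) < e"
  proof
    fix z assume z: "z \<in> S"
    have "cmod (c * g z - poly (smult c P) z) = cmod c * cmod (g z - poly P z)"
      by (simp add: norm_mult[symmetric] algebra_simps)
    also have "\<dots> \<le> cmod c * (e / (cmod c + 1))"
      using P z by (intro mult_left_mono) (auto intro: less_imp_le)
    also have "\<dots> = e * (cmod c / (cmod c + 1))" by simp
    also have "\<dots> < e * 1" proof (intro mult_strict_left_mono)
      have "0 < cmod c + 1" by (simp add: add_nonneg_pos)
      then show "cmod c / (cmod c + 1) < 1" by (simp add: divide_less_eq)
    qed (use e in auto)
    finally show "cmod (c * g z - poly (smult c P) z) < e" by simp
  qed
  then show "\<exists>P. \<forall>z\<in>S. cmod (c * g z - poly P z) < e" by blast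
qed

lemma papprox_diff: "papprox S g \<Longrightarrow> papprox S h \<Longrightarrow> papprox S (\<lambda>z. g z - h z)"
  using papprox_add[of S g "\<lambda>z. (-1) * h z"] papprox_cmult[of S h "-1"] by simp

lemma papprox_power: "compact S \<Longrightarrow> papprox S g \<Longrightarrow> papprox S (\<lambda>z. g z ^ n)"
  by (induction n) (auto intro: papprox_const papprox_mult)

lemma papprox_sum:
  "finite A \<Longrightarrow> (\<And>i. i \<in> A \<Longrightarrow> papprox S (g i)) \<Longrightarrow> papprox S (\<lambda>z. \<Sum>i\<in>A. g i z)"
  by (induction A rule: finite_induct) (auto intro: papprox_const papprox_add)

lemma papprox_prod:
  "finite A \<Longrightarrow> compact S \<Longrightarrow> (\<And>i. i \<in> A \<Longrightarrow> papprox S (g i)) \<Longrightarrow> papprox S (\<lambda>z. \<Prod>i\<in>A. g i z)"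
  by (induction A rule: finite_induct) (auto intro: papprox_const papprox_mult)

lemma real_pow_small:
  fixes q e :: real
  assumes "0 \<le> q" "q < 1" "e > 0"
  shows "\<exists>N. q ^ N < e"
proof -
  have "(\<lambda>N. q ^ N) \<longlonglongrightarrow> 0" using assms by (intro LIMSEQ_realpow_zero) auto
  then have "eventually (\<lambda>N. q ^ N < e) sequentially"
    using assms(3) by (rule order_tendstoD)
  then obtain N where "\<forall>n\<ge>N. q ^ n < e" by (auto simp: eventually_sequentially)
  then show ?thesis by blast
qed

lemma papprox_pole_far:
  assumes S: "compact S" and M: "\<And>z. z \<in> S \<Longrightarrow> cmod z \<le> M" and a: "cmod a > M" and M0: "M \<ge> 0"
  shows "papprox S (\<lambda>z. 1 / (z - a))"
proof (rule papprox_limit)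
  fix e :: real assume e: "e > 0"
  have a0: "a \<noteq> 0" using a M0 by auto
  define q where "q = M / cmod a"
  have q: "0 \<le> q" "q < 1" using a M0 by (auto simp: q_def divide_less_eq)
  obtain N where N: "q ^ N < e * (cmod a - M)"
    using real_pow_small[OF q, of "e * (cmod a - M)"] e a by auto
  define h where "h = (\<lambda>z. \<Sum>n<N. (- 1 / a) * (z / a) ^ n)"
  have pz: "papprox S (\<lambda>z. z / a)"
    by (rule papprox_cong[OF papprox_cmult[OF papprox_id, of S "1/a"]]) auto
  have "papprox S h" unfolding h_def
    by (intro papprox_sum papprox_cmult papprox_power pz S) auto
  moreover have "\<forall>z\<in>S. cmod (1 / (z - a) - h z) \<le> e"
  proof
    fix z assume z: "z \<in> S"
    have za: "cmod z < cmod a" using M[OF z] a by simp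
    then have w1: "z / a \<noteq> 1" by auto
    have zane: "z - a \<noteq> 0" using za by auto
    have "h z = (- 1 / a) * (\<Sum>n<N. (z / a) ^ n)"
      unfolding h_def by (simp only: sum_distrib_left)
    also have "\<dots> = (- 1 / a) * (((z / a) ^ N - 1) / (z / a - 1))"
      by (simp only: geometric_sum[OF w1])
    also have "\<dots> = (1 - (z / a) ^ N) / (z - a)"
      using a0 zane w1 by (simp add: field_simps)
    finally have hz: "h z = (1 - (z / a) ^ N) / (z - a)" .
    have "1 / (z - a) - h z = (z / a) ^ N / (z - a)"
      unfolding hz using zane by (simp add: field_simps)
    also have "cmod \<dots> = (cmod z / cmod a) ^ N / cmod (z - a)"
      by (simp add: norm_divide norm_power)
    also have "\<dots> \<le> q ^ N / (cmod a - M)"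
    proof (rule frac_le)
      show "(cmod z / cmod a) ^ N \<le> q ^ N"
        unfolding q_def using M[OF z] a M0 by (intro power_mono divide_right_mono) auto
      show "cmod a - M \<le> cmod (z - a)"
        using M[OF z] norm_triangle_ineq2[of a z] by (simp add: norm_minus_commute)
    qed (use a M0 q in auto)
    also have "\<dots> \<le> e" using N a by (simp add: divide_le_eq)
    finally show "cmod (1 / (z - a) - h z) \<le> e" .
  qed
  ultimately show "\<exists>h. papprox S h \<and> (\<forall>z\<in>S. cmod (1 / (z - a) - h z) \<le> e)" by blast
qed

lemma papprox_pole_step:
  assumes S: "compact S" "S \<noteq> {}" and aS: "a \<notin> S" and pa: "papprox S (\<lambda>z. 1 / (z - a))"
    and ab: "cmod (b - a) < infdist a S"
  shows "papprox S (\<lambda>z. 1 / (z - b))"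
proof (rule papprox_limit)
  fix e :: real assume e: "e > 0"
  define d where "d = infdist a S"
  have d: "d > 0" using infdist_pos_not_in_closed[of S a] S aS compact_imp_closed by (auto simp: d_def)
  define q where "q = cmod (b - a) / d"
  have q: "0 \<le> q" "q < 1" using ab d by (auto simp: q_def d_def divide_less_eq)
  have ed: "e * (d - cmod (b - a)) > 0" using e ab by (simp add: d_def)
  obtain N where N: "q ^ N < e * (d - cmod (b - a))"
    using real_pow_small[OF q ed] by auto
  define h where "h = (\<lambda>z. \<Sum>n<N. (b - a) ^ n * (1 / (z - a)) ^ (Suc n))"
  have "papprox S h" unfolding h_def
    by (intro papprox_sum papprox_cmult papprox_power pa S) auto
  moreover have "\<forall>z\<in>S. cmod (1 / (z - b) - h z) \<le> e"
  proof
    fix z assume z: "z \<in> S"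
    have dz: "d \<le> cmod (z - a)" using infdist_le[OF z, of a] by (simp add: d_def dist_norm norm_minus_commute)
    have zane: "z - a \<noteq> 0" using dz d by auto
    have zb: "cmod (z - b) \<ge> d - cmod (b - a)"
      using dz norm_triangle_ineq2[of "z - a" "b - a"] by simp
    have zbne: "z - b \<noteq> 0" using zb ab by (auto simp: d_def)
    define w where "w = (b - a) / (z - a)"
    have w1: "w \<noteq> 1" using zbne zane by (auto simp: w_def)
    have eq: "(b - a) ^ n * (1 / (z - a)) ^ Suc n = (1 / (z - a)) * w ^ n" for n
      by (simp add: w_def power_divide)
    have "h z = (1 / (z - a)) * (\<Sum>n<N. w ^ n)"
      unfolding h_def eq by (simp only: sum_distrib_left)
    also have "\<dots> = (1 / (z - a)) * ((w ^ N - 1) / (w - 1))" by (simp add: geometric_sum[OF w1])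
    also have "\<dots> = (w ^ N - 1) / ((w - 1) * (z - a))" by simp
    also have "(w - 1) * (z - a) = b - z" using zane unfolding w_def by (simp add: field_simps)
    also have "(w ^ N - 1) / (b - z) = (1 - w ^ N) / (z - b)"
      by (metis minus_diff_eq divide_minus_left divide_minus_right)
    finally have hz: "h z = (1 - w ^ N) / (z - b)" .
    have "1 / (z - b) - h z = w ^ N / (z - b)"
      unfolding hz using zbne by (simp add: field_simps)
    also have "cmod \<dots> = (cmod (b - a) / cmod (z - a)) ^ N / cmod (z - b)"
      by (simp add: norm_divide norm_power w_def)
    also have "\<dots> \<le> q ^ N / (d - cmod (b - a))"
    proof (rule frac_le)
      show "(cmod (b - a) / cmod (z - a)) ^ N \<le> q ^ N"
        unfolding q_def using dz d by (intro power_mono divide_left_mono) (auto simp: zero_less_mult_iff)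
    qed (use zb ab q in \<open>auto simp: d_def\<close>)
    also have "\<dots> \<le> e" using N ab by (simp add: divide_le_eq d_def)
    finally show "cmod (1 / (z - b) - h z) \<le> e" .
  qed
  ultimately show "\<exists>h. papprox S h \<and> (\<forall>z\<in>S. cmod (1 / (z - b) - h z) \<le> e)" by blast
qed

lemma papprox_pole_connected:
  assumes S: "compact S" "S \<noteq> {}" and C: "connected C" "C \<inter> S = {}"
    and a0: "a0 \<in> C" "papprox S (\<lambda>z. 1 / (z - a0))" and a: "a \<in> C"
  shows "papprox S (\<lambda>z. 1 / (z - a))"
proof -
  define U where "U = {a. a \<notin> S \<and> papprox S (\<lambda>z. 1 / (z - a))}"
  define O1 where "O1 = (\<Union>a\<in>U. ball a (infdist a S))"
  define O2 where "O2 = (\<Union>a\<in>(- S - U). ball a (infdist a S / 2))"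
  have pos: "infdist x S > 0" if "x \<notin> S" for x
    using infdist_pos_not_in_closed[of S x] S that compact_imp_closed by auto
  have step: "b \<in> U" if "a \<in> U" "dist a b < infdist a S" for a b
  proof -
    have "b \<notin> S"
    proof
      assume "b \<in> S"
      then have "infdist a S \<le> dist a b" by (rule infdist_le)
      then show False using that by simp
    qed
    moreover have "papprox S (\<lambda>z. 1 / (z - b))"
      using papprox_pole_step[OF S, of a b] that by (auto simp: U_def dist_norm norm_minus_commute)
    ultimately show ?thesis by (simp add: U_def)
  qed
  have O1U: "O1 \<subseteq> U" unfolding O1_def using step by auto
  have O2U: "O2 \<inter> U = {}"
  proof (rule ccontr)
    assume "O2 \<inter> U \<noteq> {}"
    then obtain a b where ab: "a \<notin> S" "a \<notin> U" "dist a b < infdist a S / 2" "b \<in> U"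
      unfolding O2_def by auto
    have "infdist a S \<le> infdist b S + dist a b" by (rule infdist_triangle)
    then have "dist b a < infdist b S" using ab by (simp add: dist_commute)
    then have "a \<in> U" using step[OF ab(4)] by simp
    with ab show False by simp
  qed
  have "open O1" "open O2" unfolding O1_def O2_def by auto
  moreover have "O1 \<inter> O2 \<inter> C = {}" using O1U O2U by auto
  moreover have "C \<subseteq> O1 \<union> O2"
  proof
    fix x assume x: "x \<in> C"
    then have xS: "x \<notin> S" using C by auto
    show "x \<in> O1 \<union> O2"
    proof (cases "x \<in> U")
      case True then show ?thesis unfolding O1_def using pos[OF xS] by (intro UnI1 UN_I[of x]) auto
    next
      case False then show ?thesis unfolding O2_def using pos[OF xS] xS by (intro UnI2 UN_I[of x]) auto
    qed
  qed
  ultimately have "O1 \<inter> C = {} \<or> O2 \<inter> C = {}" using connectedD[OF C(1)] by blast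
  moreover have "a0 \<in> O1"
  proof -
    have "a0 \<in> U" using a0 C by (auto simp: U_def)
    then show ?thesis using pos[of a0] unfolding O1_def U_def by auto
  qed
  ultimately have "O2 \<inter> C = {}" using a0 by auto
  then have "a \<in> O1" using a \<open>C \<subseteq> O1 \<union> O2\<close> by auto
  then show ?thesis using O1U by (auto simp: U_def)
qed

lemma papprox_empty: "papprox {} g"
  unfolding papprox_def by auto

lemma bl_complex_decomp:
  assumes "bounded_linear (u :: complex \<Rightarrow> real)"
  shows "u z = Re z * u 1 + Im z * u \<i>"
proof -
  have "z = Re z *\<^sub>R 1 + Im z *\<^sub>R \<i>" by (simp add: complex_eq_iff)
  then have "u z = u (Re z *\<^sub>R 1 + Im z *\<^sub>R \<i>)" by simp
  also have "\<dots> = Re z * u 1 + Im z * u \<i>"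
    using bounded_linear.linear[OF assms] by (simp add: linear_add linear_scale)
  finally show ?thesis .
qed

lemma mergelyan_circle:
  assumes K: "compact K" "K \<subseteq> sphere 0 1" and b: "b \<in> sphere 0 1" "b \<notin> K"
    and phi: "continuous_on K \<phi>"
  shows "papprox K \<phi>"
proof (cases "K = {}")
  case True then show ?thesis by (simp add: papprox_empty)
next
  case Kne: False
  define C where "C = (\<lambda>t. complex_of_real t * b) ` {0..2}"
  have Cc: "connected C" unfolding C_def
    by (intro connected_continuous_image connected_Icc continuous_intros)
  have CK: "C \<inter> K = {}"
  proof (rule ccontr)
    assume "C \<inter> K \<noteq> {}"
    then obtain t where t: "t \<in> {0..2}" "complex_of_real t * b \<in> K" unfolding C_def by blast
    have "cmod (complex_of_real t * b) = 1" using t(2) K(2) by auto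
    then have "t = 1" using t(1) b(1) by (simp add: norm_mult)
    then show False using t b by simp
  qed
  have c2: "2 * b \<in> C" unfolding C_def by (rule image_eqI[of _ _ 2]) auto
  have c0: "0 \<in> C" unfolding C_def by (rule image_eqI[of _ _ 0]) auto
  have base: "papprox K (\<lambda>z. 1 / (z - 2 * b))"
    by (rule papprox_pole_far[OF K(1), of 1]) (use K(2) b(1) in \<open>auto simp: norm_mult\<close>)
  have p0: "papprox K (\<lambda>z. 1 / (z - 0))"
    by (rule papprox_pole_connected[OF K(1) Kne Cc CK c2 base c0])
  have cnj: "papprox K cnj"
  proof (rule papprox_cong[OF p0])
    fix z assume "z \<in> K"
    then have "cmod z = 1" using K(2) by auto
    then have "z * cnj z = 1" using complex_norm_square[of z] by simp
    then show "1 / (z - 0) = cnj z"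
      by (metis diff_zero divide_eq_eq mult.commute mult_zero_left zero_neq_one)
  qed
  have re: "papprox K (\<lambda>z. complex_of_real (Re z))"
  proof (rule papprox_cong[OF papprox_cmult[OF papprox_add[OF papprox_id cnj], of "1/2"]])
    fix z show "1 / 2 * (z + cnj z) = complex_of_real (Re z)"
      by (simp add: complex_add_cnj)
  qed
  have im: "papprox K (\<lambda>z. complex_of_real (Im z))"
  proof (rule papprox_cong[OF papprox_cmult[OF papprox_diff[OF papprox_id cnj], of "- \<i> / 2"]])
    fix z show "- \<i> / 2 * (z - cnj z) = complex_of_real (Im z)"
      by (simp add: complex_diff_cnj complex_eq_iff)
  qed
  have rpf: "papprox K (\<lambda>z. complex_of_real (u z))" if "real_polynomial_function u" for u
    using that
  proof (induction rule: real_polynomial_function.induct)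
    case (linear f)
    have "papprox K (\<lambda>z. complex_of_real (f 1) * complex_of_real (Re z) + complex_of_real (f \<i>) * complex_of_real (Im z))"
      by (intro papprox_add papprox_cmult re im)
    then show ?case
    proof (rule papprox_cong)
      fix z
      have "f z = Re z * f 1 + Im z * f \<i>" by (rule bl_complex_decomp[OF linear])
      then show "complex_of_real (f 1) * complex_of_real (Re z) + complex_of_real (f \<i>) * complex_of_real (Im z) = complex_of_real (f z)"
        by (simp add: algebra_simps)
    qed
  next
    case (const c) then show ?case by (rule papprox_const)
  next
    case (add f g) then show ?case by (simp add: papprox_add)
  next
    case (mult f g) then show ?case by (simp add: papprox_mult K(1))
  qed
  show ?thesis
  proof (rule papprox_limit)
    fix e :: real assume e: "e > 0"
    obtain u1 where u1: "real_polynomial_function u1" "\<And>z. z \<in> K \<Longrightarrow> \<bar>Re (\<phi> z) - u1 z\<bar> < e / 2"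
      using Stone_Weierstrass_real_polynomial_function[OF K(1), of "\<lambda>z. Re (\<phi> z)" "e/2"] e phi
      by (auto intro: continuous_intros)
    obtain u2 where u2: "real_polynomial_function u2" "\<And>z. z \<in> K \<Longrightarrow> \<bar>Im (\<phi> z) - u2 z\<bar> < e / 2"
      using Stone_Weierstrass_real_polynomial_function[OF K(1), of "\<lambda>z. Im (\<phi> z)" "e/2"] e phi
      by (auto intro: continuous_intros)
    define h where "h = (\<lambda>z. complex_of_real (u1 z) + \<i> * complex_of_real (u2 z))"
    have "papprox K h" unfolding h_def by (intro papprox_add papprox_cmult rpf u1 u2)
    moreover have "\<forall>z\<in>K. cmod (\<phi> z - h z) \<le> e"
    proof
      fix z assume z: "z \<in> K"
      have "\<phi> z - h z = complex_of_real (Re (\<phi> z) - u1 z) + \<i> * complex_of_real (Im (\<phi> z) - u2 z)"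
        unfolding h_def by (simp add: complex_eq_iff)
      then have "cmod (\<phi> z - h z) \<le> \<bar>Re (\<phi> z) - u1 z\<bar> + \<bar>Im (\<phi> z) - u2 z\<bar>"
        using norm_triangle_ineq[of "complex_of_real (Re (\<phi> z) - u1 z)" "\<i> * complex_of_real (Im (\<phi> z) - u2 z)"]
        by (simp only: norm_mult norm_ii norm_of_real mult_1)
      then show "cmod (\<phi> z - h z) \<le> e" using u1(2)[OF z] u2(2)[OF z] by simp
    qed
    ultimately show "\<exists>h. papprox K h \<and> (\<forall>z\<in>K. cmod (\<phi> z - h z) \<le> e)" by blast
  qed
qed

lemma papprox_inv_poly:
  assumes S: "compact S" "S \<noteq> {}" and C: "connected C" "C \<inter> S = {}" "a0 \<in> C" "papprox S (\<lambda>z. 1 / (z - a0))"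
    and p: "p \<noteq> 0" and roots: "\<And>z. poly p z = 0 \<Longrightarrow> z \<in> C"
  shows "papprox S (\<lambda>z. 1 / poly p z)"
proof -
  obtain root where dec: "smult (lead_coeff p) (\<Prod>i<degree p. [:-root i, 1:]) = p"
    by (rule complex_poly_decompose')
  have pw: "poly p w = lead_coeff p * (\<Prod>i<degree p. (w - root i))" for w
    using arg_cong[OF dec, of "\<lambda>q. poly q w"] by (simp add: poly_prod)
  have rC: "root i \<in> C" if "i < degree p" for i
  proof (rule roots)
    have "(\<Prod>ia<degree p. (root i - root ia)) = 0" by (rule prod_zero) (use that in auto)
    then show "poly p (root i) = 0" using pw[of "root i"] by simp
  qed
  have "papprox S (\<lambda>w. (1 / lead_coeff p) * (\<Prod>i<degree p. 1 / (w - root i)))"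
    by (intro papprox_cmult papprox_prod S finite_lessThan papprox_pole_connected[OF S C] rC) auto
  then show ?thesis
  proof (rule papprox_cong)
    fix w
    have "(\<Prod>i<degree p. 1 / (w - root i)) = 1 / (\<Prod>i<degree p. (w - root i))"
      by (simp add: prod_dividef)
    then show "1 / lead_coeff p * (\<Prod>i<degree p. 1 / (w - root i)) = 1 / poly p w"
      by (simp add: pw)
  qed
qed

lemma chi_approx:
  assumes R: "0 \<le> R" "R < \<rho>" "\<rho> \<le> 1" and K: "compact K" "K \<subseteq> sphere 0 1"
    and b: "b \<in> sphere 0 1" "b \<notin> K" and eta: "\<eta> > 0"
  shows "\<exists>U. (\<forall>z\<in>cball 0 R. cmod (poly U z) \<le> \<eta>) \<and> (\<forall>\<zeta>\<in>K. cmod (poly U (of_real \<rho> * \<zeta>) - 1) \<le> \<eta>)"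
proof -
  define s where "s = (R + \<rho>) / 2"
  have s: "R < s" "s < \<rho>" "0 < s" using R by (auto simp: s_def)
  define S where "S = cball 0 R \<union> (\<lambda>\<zeta>. of_real \<rho> * \<zeta>) ` K"
  have Sc: "compact S" unfolding S_def
    by (intro compact_Un compact_cball compact_continuous_image K continuous_intros)
  have Sne: "S \<noteq> {}" using R unfolding S_def by auto
  have S1: "cmod z \<le> 1" if "z \<in> S" for z
    using that R K(2) unfolding S_def by (auto simp: norm_mult)
  define C where "C = (\<lambda>t. complex_of_real t * b) ` {s..2} \<union> sphere 0 s"
  have sb: "complex_of_real s * b \<in> sphere 0 s" using b s by (simp add: norm_mult)
  have Cc: "connected C" unfolding C_def
  proof (rule connected_Un)
    show "connected ((\<lambda>t. complex_of_real t * b) ` {s..2})"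
      by (intro connected_continuous_image connected_Icc continuous_intros)
    show "connected (sphere (0::complex) s)" by (rule connected_sphere) simp
    show "(\<lambda>t. complex_of_real t * b) ` {s..2} \<inter> sphere 0 s \<noteq> {}"
      using sb s R by (auto intro!: image_eqI[of _ _ s])
  qed
  have CS: "C \<inter> S = {}"
  proof (rule ccontr)
    assume "C \<inter> S \<noteq> {}"
    then obtain z where zC: "z \<in> C" and zS: "z \<in> S" by blast
    show False
    proof (cases "z \<in> sphere 0 s")
      case True
      then show False using zS s K(2) unfolding S_def by (auto simp: norm_mult)
    next
      case False
      then obtain t where t: "t \<in> {s..2}" "z = complex_of_real t * b" using zC unfolding C_def by blast
      have nz: "cmod z = t" using t b s by (simp add: norm_mult)
      show False
      proof (cases "z \<in> cball 0 R")
        case True then show False using nz t s by simp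
      next
        case False
        then obtain \<zeta> where \<zeta>: "\<zeta> \<in> K" "z = of_real \<rho> * \<zeta>" using zS unfolding S_def by blast
        have "cmod z = \<rho>" using \<zeta> K(2) R by (auto simp: norm_mult)
        then have "t = \<rho>" using nz by simp
        then have "\<zeta> = b" using \<zeta>(2) t(2) s R by simp
        then show False using \<zeta> b by simp
      qed
    qed
  qed
  have a0: "2 * b \<in> C" unfolding C_def using s R by (intro UnI1 image_eqI[of _ _ 2]) auto
  have base: "papprox S (\<lambda>z. 1 / (z - 2 * b))"
    by (rule papprox_pole_far[OF Sc S1, of "2 * b"]) (use b in \<open>auto simp: norm_mult\<close>)
  define q1 where "q1 = R / s"
  define q2 where "q2 = s / \<rho>"
  have q1: "0 \<le> q1" "q1 < 1" using R s by (auto simp: q1_def divide_less_eq)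
  have q2: "0 \<le> q2" "q2 < 1" using R s by (auto simp: q2_def divide_less_eq)
  have emin: "min (1/2) (\<eta>/4) > 0" using eta by simp
  obtain N1 where N1: "q1 ^ N1 < min (1/2) (\<eta>/4)" using real_pow_small[OF q1 emin] by blast
  obtain N2 where N2: "q2 ^ N2 < min (1/2) (\<eta>/4)" using real_pow_small[OF q2 emin] by blast
  define N where "N = Suc (max N1 N2)"
  have N0: "N > 0" by (simp add: N_def)
  have qN1: "q1 ^ N \<le> min (1/2) (\<eta>/4)"
  proof -
    have "q1 ^ N \<le> q1 ^ N1" by (rule power_decreasing) (use q1 in \<open>auto simp: N_def\<close>)
    then show ?thesis using N1 by linarith
  qed
  have qN2: "q2 ^ N \<le> min (1/2) (\<eta>/4)"
  proof -
    have "q2 ^ N \<le> q2 ^ N2" by (rule power_decreasing) (use q2 in \<open>auto simp: N_def\<close>)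
    then show ?thesis using N2 by linarith
  qed
  define p where "p = monom 1 N - [:complex_of_real s ^ N:]"
  have pz: "poly p z = z ^ N - complex_of_real s ^ N" for z by (simp add: p_def poly_monom)
  have pne: "p \<noteq> 0"
  proof
    assume "p = 0"
    then have "poly p 0 = 0" by simp
    moreover have "(0::complex) ^ N = 0" using N0 by simp
    ultimately have "complex_of_real s ^ N = 0" using pz[of 0] by simp
    then show False using s by simp
  qed
  have roots: "z \<in> C" if "poly p z = 0" for z
  proof -
    have "z ^ N = complex_of_real s ^ N" using that pz by simp
    then have "cmod (z ^ N) = cmod (complex_of_real s ^ N)" by simp
    then have "cmod z ^ N = s ^ N" using s by (simp add: norm_power)
    then have "cmod z = s" using N0 s by (simp add: power_eq_iff_eq_base)
    then show ?thesis unfolding C_def by simp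
  qed
  have pw: "papprox S (\<lambda>z. z ^ N * (1 / poly p z))"
    by (intro papprox_mult papprox_power papprox_id Sc papprox_inv_poly[OF Sc Sne Cc CS a0 base pne roots])
  then obtain U where U: "\<forall>z\<in>S. cmod (z ^ N * (1 / poly p z) - poly U z) < \<eta> / 2"
    unfolding papprox_def using eta by (meson half_gt_zero)
  have sN: "s ^ N > 0" using s by simp
  show ?thesis
  proof (intro exI[of _ U] conjI ballI)
    fix z :: complex assume z: "z \<in> cball 0 R"
    then have zS: "z \<in> S" unfolding S_def by simp
    have nz: "cmod z \<le> R" using z by simp
    have RN: "R ^ N = q1 ^ N * s ^ N" using s by (simp add: q1_def power_divide)
    have lowb: "cmod (poly p z) \<ge> s ^ N - R ^ N"
    proof -
      have "cmod (complex_of_real s ^ N) - cmod (z ^ N) \<le> cmod (z ^ N - complex_of_real s ^ N)"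
        using norm_triangle_ineq2[of "complex_of_real s ^ N" "z ^ N"] by (simp add: norm_minus_commute)
      moreover have "cmod (z ^ N) \<le> R ^ N" using nz by (simp add: norm_power power_mono)
      ultimately show ?thesis using s by (simp add: pz norm_power)
    qed
    have "q1 ^ N * s ^ N \<le> (1/2) * s ^ N" by (rule mult_right_mono) (use qN1 sN in auto)
    then have gap: "s ^ N - R ^ N \<ge> s ^ N / 2" using RN by linarith
    have "cmod (z ^ N * (1 / poly p z)) = cmod z ^ N / cmod (poly p z)"
      by (simp add: norm_power norm_divide)
    also have "\<dots> \<le> R ^ N / (s ^ N / 2)"
      using gap lowb sN nz R(1) by (intro frac_le power_mono) (auto simp: zero_le_power)
    also have "\<dots> = 2 * q1 ^ N" using sN RN s(3) by (simp add: field_simps)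
    also have "\<dots> \<le> \<eta> / 2" using qN1 by simp
    finally have w: "cmod (z ^ N * (1 / poly p z)) \<le> \<eta> / 2" .
    have "cmod (poly U z) \<le> cmod (z ^ N * (1 / poly p z)) + cmod (z ^ N * (1 / poly p z) - poly U z)"
      using norm_triangle_sub[of "poly U z" "z ^ N * (1 / poly p z)"] by (simp add: norm_minus_commute)
    moreover have "cmod (z ^ N * (1 / poly p z) - poly U z) < \<eta> / 2" using U zS by blast
    ultimately show "cmod (poly U z) \<le> \<eta>" using w by linarith
  next
    fix \<zeta> assume \<zeta>: "\<zeta> \<in> K"
    define z where "z = of_real \<rho> * \<zeta>"
    have zS: "z \<in> S" unfolding S_def z_def using \<zeta> by blast
    have nz: "cmod z = \<rho>" using \<zeta> K(2) R s by (auto simp: z_def norm_mult)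
    have sN': "s ^ N = q2 ^ N * \<rho> ^ N" using s by (simp add: q2_def power_divide)
    have lowb: "cmod (poly p z) \<ge> \<rho> ^ N - s ^ N"
    proof -
      have "cmod (z ^ N) - cmod (complex_of_real s ^ N) \<le> cmod (z ^ N - complex_of_real s ^ N)"
        by (rule norm_triangle_ineq2)
      then show ?thesis using s nz by (simp add: pz norm_power)
    qed
    have rN: "\<rho> ^ N > 0" using s by simp
    have "q2 ^ N * \<rho> ^ N \<le> (1/2) * \<rho> ^ N" by (rule mult_right_mono) (use qN2 rN in auto)
    then have gap: "\<rho> ^ N - s ^ N \<ge> \<rho> ^ N / 2" using sN' by linarith
    have pnz: "poly p z \<noteq> 0" using lowb gap rN by auto
    have "z ^ N * (1 / poly p z) - 1 = complex_of_real s ^ N / poly p z"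
      using pnz by (simp add: pz field_simps)
    then have "cmod (z ^ N * (1 / poly p z) - 1) = s ^ N / cmod (poly p z)"
      using s by (simp add: norm_divide norm_power)
    also have "\<dots> \<le> s ^ N / (\<rho> ^ N / 2)"
      using gap lowb sN rN by (intro frac_le) auto
    also have "\<dots> = 2 * q2 ^ N" using rN sN' s R by (simp add: field_simps)
    also have "\<dots> \<le> \<eta> / 2" using qN2 by simp
    finally have w: "cmod (z ^ N * (1 / poly p z) - 1) \<le> \<eta> / 2" .
    have "cmod (poly U z - 1) \<le> cmod (z ^ N * (1 / poly p z) - 1) + cmod (z ^ N * (1 / poly p z) - poly U z)"
      using norm_triangle_sub[of "poly U z - 1" "z ^ N * (1 / poly p z) - 1"] by (simp add: norm_minus_commute)
    moreover have "cmod (z ^ N * (1 / poly p z) - poly U z) < \<eta> / 2" using U zS by blast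
    ultimately show "cmod (poly U (of_real \<rho> * \<zeta>) - 1) \<le> \<eta>" using w unfolding z_def by linarith
  qed
qed

lemma runge_step:
  assumes R: "0 \<le> R" "R < \<rho>" "\<rho> \<le> 1" and K: "compact K" "K \<subseteq> sphere 0 1" "K \<noteq> sphere 0 1"
    and g: "continuous_on K g" and e: "\<epsilon> > 0"
  shows "\<exists>H. (\<forall>z\<in>cball 0 R. cmod (poly H z) \<le> \<epsilon>) \<and> (\<forall>\<zeta>\<in>K. cmod (poly H (of_real \<rho> * \<zeta>) - g \<zeta>) \<le> \<epsilon>)"
proof -
  obtain b where b: "b \<in> sphere 0 1" "b \<notin> K" using K by blast
  have "papprox K g" by (rule mergelyan_circle[OF K(1,2) b g])
  then obtain P0 where P0: "\<forall>\<zeta>\<in>K. cmod (g \<zeta> - poly P0 \<zeta>) < \<epsilon> / 2"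
    unfolding papprox_def using e by (meson half_gt_zero)
  define P1 where "P1 = pcompose P0 [:0, 1 / complex_of_real \<rho>:]"
  have P1: "poly P1 z = poly P0 (z / complex_of_real \<rho>)" for z by (simp add: P1_def poly_pcompose)
  have "compact (poly P1 ` cball 0 1)"
    by (intro compact_continuous_image compact_cball) (auto intro: continuous_intros)
  then obtain B where B: "\<forall>z\<in>cball 0 1. cmod (poly P1 z) \<le> B"
    using compact_imp_bounded[of "poly P1 ` cball 0 1"] by (auto simp: bounded_iff)
  define M where "M = max 1 B"
  have M: "M \<ge> 1" "\<forall>z\<in>cball 0 1. cmod (poly P1 z) \<le> M" using B by (auto simp: M_def)
  have eta: "\<epsilon> / (2 * M) > 0" using e M by simp
  obtain U where U: "\<forall>z\<in>cball 0 R. cmod (poly U z) \<le> \<epsilon> / (2 * M)"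
    "\<forall>\<zeta>\<in>K. cmod (poly U (of_real \<rho> * \<zeta>) - 1) \<le> \<epsilon> / (2 * M)"
    using chi_approx[OF R K(1,2) b eta] by blast
  have Meq: "M * (\<epsilon> / (2 * M)) = \<epsilon> / 2" using M by simp
  show ?thesis
  proof (intro exI[of _ "P1 * U"] conjI ballI)
    fix z :: complex assume z: "z \<in> cball 0 R"
    then have z1: "z \<in> cball 0 1" using R by simp
    have "cmod (poly (P1 * U) z) = cmod (poly P1 z) * cmod (poly U z)" by (simp add: norm_mult)
    also have "\<dots> \<le> M * (\<epsilon> / (2 * M))"
      using M z1 U z by (intro mult_mono) auto
    also have "\<dots> \<le> \<epsilon>" using Meq e by simp
    finally show "cmod (poly (P1 * U) z) \<le> \<epsilon>" .
  next
    fix \<zeta> assume \<zeta>: "\<zeta> \<in> K"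
    define z where "z = of_real \<rho> * \<zeta>"
    have z1: "z \<in> cball 0 1" using \<zeta> K(2) R by (auto simp: z_def norm_mult)
    have rho0: "complex_of_real \<rho> \<noteq> 0" using R by simp
    have Pz: "poly P1 z = poly P0 \<zeta>" using rho0 by (simp add: P1 z_def)
    have eq: "poly (P1 * U) z - g \<zeta> = poly P1 z * (poly U z - 1) + (poly P0 \<zeta> - g \<zeta>)"
      by (simp add: Pz algebra_simps)
    have "cmod (poly (P1 * U) z - g \<zeta>) \<le> cmod (poly P1 z * (poly U z - 1)) + cmod (poly P0 \<zeta> - g \<zeta>)"
      unfolding eq by (rule norm_triangle_ineq)
    also have "\<dots> = cmod (poly P1 z) * cmod (poly U z - 1) + cmod (g \<zeta> - poly P0 \<zeta>)"
      by (simp add: norm_mult norm_minus_commute)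
    also have "\<dots> \<le> M * (\<epsilon> / (2 * M)) + \<epsilon> / 2"
      using M z1 U \<zeta> P0 by (intro add_mono mult_mono) (auto simp: z_def less_imp_le)
    also have "\<dots> = \<epsilon>" using Meq by simp
    finally show "cmod (poly (P1 * U) (of_real \<rho> * \<zeta>) - g \<zeta>) \<le> \<epsilon>" by (simp add: z_def)
  qed
qed

lemma poly_higher_deriv: "(deriv ^^ n) (poly H) = poly ((pderiv ^^ n) H)"
proof (induction n)
  case 0 then show ?case by simp
next
  case (Suc n)
  have "(deriv ^^ Suc n) (poly H) = deriv ((deriv ^^ n) (poly H))" by simp
  also have "\<dots> = deriv (poly ((pderiv ^^ n) H))" by (simp add: Suc)
  also have "\<dots> = poly (pderiv ((pderiv ^^ n) H))"
    by (rule ext, rule DERIV_imp_deriv, rule poly_DERIV)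
  finally show ?case by simp
qed

lemma poly_coeff_bound:
  assumes R: "R > 0" and B: "\<forall>z\<in>cball 0 R. cmod (poly H z) \<le> \<epsilon>"
  shows "cmod (coeff H i) \<le> \<epsilon> / R ^ i"
proof -
  have "cmod ((deriv ^^ i) (poly H) 0) \<le> fact i * \<epsilon> / R ^ i"
  proof (rule Cauchy_inequality)
    show "poly H holomorphic_on ball 0 R" by (intro holomorphic_intros)
    show "continuous_on (cball 0 R) (poly H)" by (intro continuous_intros)
    show "cmod (poly H x) \<le> \<epsilon>" if "cmod (0 - x) = R" for x
      using B that by auto
  qed (use R in auto)
  moreover have "(deriv ^^ i) (poly H) 0 = fact i * coeff H i"
    by (simp add: poly_higher_deriv poly_0_coeff_0 coeff_higher_pderiv pochhammer_fact)
  ultimately have "fact i * cmod (coeff H i) \<le> fact i * (\<epsilon> / R ^ i)"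
    by (simp add: norm_mult)
  then show ?thesis using mult_le_cancel_left_pos[of "fact i" "cmod (coeff H i)" "\<epsilon> / R ^ i"] by simp
qed

lemma rat_approx_real: fixes x \<delta> :: real shows "\<delta> > 0 \<Longrightarrow> \<exists>u::rat. \<bar>x - of_rat u\<bar> < \<delta>"
proof -
  assume d: "\<delta> > 0"
  obtain q where q: "q \<in> \<rat>" "x < q" "q < x + \<delta>" using Rats_dense_in_real[of x "x + \<delta>"] d by auto
  then obtain u where "q = of_rat u" by (auto elim: Rats_cases)
  then show ?thesis using q by (intro exI[of _ u]) auto
qed

definition cplx :: "rat \<times> rat \<Rightarrow> complex" where
  "cplx p = Complex (of_rat (fst p)) (of_rat (snd p))"

lemma rat_approx_complex: "\<delta> > 0 \<Longrightarrow> \<exists>p. cmod (a - cplx p) < \<delta>"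
proof -
  assume d: "\<delta> > 0"
  obtain u where u: "\<bar>Re a - of_rat u\<bar> < \<delta> / 2" using rat_approx_real[of "\<delta>/2"] d by auto
  obtain v where v: "\<bar>Im a - of_rat v\<bar> < \<delta> / 2" using rat_approx_real[of "\<delta>/2"] d by auto
  have "cmod (a - cplx (u, v)) \<le> \<bar>Re (a - cplx (u, v))\<bar> + \<bar>Im (a - cplx (u, v))\<bar>" by (rule cmod_le)
  also have "\<dots> < \<delta>" using u v by (simp add: cplx_def)
  finally show ?thesis by blast
qed

lemma rat_poly_approx:
  assumes "\<delta> > 0"
  shows "\<exists>L. \<forall>z\<in>cball 0 1. cmod (poly P z - poly (Poly (map cplx L)) z) < \<delta>"
  using assms
proof (induction P arbitrary: \<delta> rule: pCons_induct)
  case 0 then show ?case by (intro exI[of _ "[]"]) simp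
next
  case (pCons a P)
  obtain L where L: "\<forall>z\<in>cball 0 1. cmod (poly P z - poly (Poly (map cplx L)) z) < \<delta> / 2"
    using pCons.IH[of "\<delta>/2"] pCons.prems by auto
  obtain p where p: "cmod (a - cplx p) < \<delta> / 2" using rat_approx_complex[of "\<delta>/2" a] pCons.prems by auto
  show ?case
  proof (intro exI[of _ "p # L"] ballI)
    fix z :: complex assume z: "z \<in> cball 0 1"
    have "poly (pCons a P) z - poly (Poly (map cplx (p # L))) z
          = (a - cplx p) + z * (poly P z - poly (Poly (map cplx L)) z)"
      by (simp add: algebra_simps)
    then have "cmod (poly (pCons a P) z - poly (Poly (map cplx (p # L))) z)
          \<le> cmod (a - cplx p) + cmod z * cmod (poly P z - poly (Poly (map cplx L)) z)"
      by (metis norm_mult norm_triangle_ineq)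
    also have "\<dots> \<le> cmod (a - cplx p) + 1 * cmod (poly P z - poly (Poly (map cplx L)) z)"
      using z by (intro add_left_mono mult_right_mono) auto
    also have "\<dots> < \<delta>"
    proof -
      have "cmod (poly P z - poly (Poly (map cplx L)) z) < \<delta> / 2" using L z by blast
      then show ?thesis using p by simp
    qed
    finally show "cmod (poly (pCons a P) z - poly (Poly (map cplx (p # L))) z) < \<delta>" .
  qed
qed

type_synonym task = "((rat \<times> rat) \<times> rat) \<times> (rat \<times> rat) list"

definition tK0 :: "task \<Rightarrow> complex set" where
  "tK0 t = sphere 0 1 - ball (cplx (fst (fst t))) (of_rat (snd (fst t)))"

definition tK :: "task \<Rightarrow> complex set" where
  "tK t = (if tK0 t \<noteq> sphere 0 1 then tK0 t else {})"

definition tq :: "task \<Rightarrow> complex poly" where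
  "tq t = Poly (map cplx (snd t))"

definition task :: "nat \<Rightarrow> task" where
  "task j = from_nat (fst (prod_decode j))"

lemma tK_props: "compact (tK t)" "tK t \<subseteq> sphere 0 1" "tK t \<noteq> sphere 0 1"
proof -
  have "compact (tK0 t)" unfolding tK0_def by (intro compact_diff compact_sphere open_ball)
  then show "compact (tK t)" by (simp add: tK_def)
  show "tK t \<subseteq> sphere 0 1" by (auto simp: tK_def tK0_def)
  show "tK t \<noteq> sphere 0 1"
  proof (cases "tK0 t \<noteq> sphere 0 1")
    case True then show ?thesis by (simp add: tK_def)
  next
    case False
    then have "tK t = {}" by (simp add: tK_def)
    moreover have "(1::complex) \<in> sphere 0 1" by simp
    ultimately show ?thesis by force
  qed
qed

lemma task_infinitely_often: "\<exists>j\<ge>M. task j = t"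
proof (intro exI[of _ "prod_encode (to_nat t, M)"] conjI)
  show "M \<le> prod_encode (to_nat t, M)" by (rule le_prod_encode_2)
  show "task (prod_encode (to_nat t, M)) = t" by (simp add: task_def)
qed

lemma task_cover:
  assumes K: "compact K" "K \<subseteq> sphere 0 1" "K \<noteq> sphere 0 1" and phi: "continuous_on K \<phi>" and e: "\<epsilon> > 0"
  shows "\<exists>t. K \<subseteq> tK t \<and> (\<forall>\<zeta>\<in>K. cmod (poly (tq t) \<zeta> - \<phi> \<zeta>) < \<epsilon>)"
proof -
  obtain b0 where b0: "b0 \<in> sphere 0 1" "b0 \<notin> K" using K by blast
  have "open (- K)" using K(1) compact_imp_closed by blast
  then obtain d where d: "d > 0" "ball b0 d \<subseteq> - K" using b0 open_contains_ball by blast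
  obtain c where c: "cmod (b0 - cplx c) < d / 2" using rat_approx_complex[of "d/2" b0] d by auto
  obtain e' where e': "cmod (b0 - cplx c) < of_rat e'" "of_rat e' < d / 2"
  proof -
    obtain q where q: "q \<in> \<rat>" "cmod (b0 - cplx c) < q" "q < d / 2" using Rats_dense_in_real c by blast
    then obtain u where "q = of_rat u" by (auto elim: Rats_cases)
    then show ?thesis using q that by auto
  qed
  define t0 :: "(rat \<times> rat) \<times> rat" where "t0 = (c, e')"
  have b0ball: "b0 \<in> ball (cplx c) (of_rat e')" using e' by (simp add: dist_norm norm_minus_commute)
  have ballsub: "ball (cplx c) (of_rat e') \<subseteq> ball b0 d"
  proof
    fix z assume "z \<in> ball (cplx c) (of_rat e')"
    then have "cmod (z - cplx c) < of_rat e'" by (simp add: dist_norm norm_minus_commute)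
    then have "cmod (z - b0) < d"
      using e' c norm_triangle_ineq[of "z - cplx c" "cplx c - b0"] by (simp add: norm_minus_commute)
    then show "z \<in> ball b0 d" by (simp add: dist_norm norm_minus_commute)
  qed
  obtain P where P: "\<forall>\<zeta>\<in>K. cmod (\<phi> \<zeta> - poly P \<zeta>) < \<epsilon> / 2"
    using mergelyan_circle[OF K(1,2) b0 phi] e unfolding papprox_def by (meson half_gt_zero)
  obtain L where L: "\<forall>z\<in>cball 0 1. cmod (poly P z - poly (Poly (map cplx L)) z) < \<epsilon> / 2"
    using rat_poly_approx[of "\<epsilon>/2" P] e by auto
  define t where "t = (t0, L)"
  have t0K: "tK0 t \<noteq> sphere 0 1" using b0 b0ball by (auto simp: tK0_def t_def t0_def)
  have "K \<subseteq> tK t"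
  proof
    fix z assume z: "z \<in> K"
    then have "z \<notin> ball (cplx c) (of_rat e')" using ballsub d by auto
    then show "z \<in> tK t" using z K(2) t0K by (auto simp: tK_def tK0_def t_def t0_def)
  qed
  moreover have "\<forall>\<zeta>\<in>K. cmod (poly (tq t) \<zeta> - \<phi> \<zeta>) < \<epsilon>"
  proof
    fix \<zeta> assume z: "\<zeta> \<in> K"
    then have z1: "\<zeta> \<in> cball 0 1" using K(2) by auto
    have "cmod (poly (tq t) \<zeta> - \<phi> \<zeta>) \<le> cmod (poly P \<zeta> - poly (tq t) \<zeta>) + cmod (\<phi> \<zeta> - poly P \<zeta>)"
      using norm_triangle_ineq[of "poly (tq t) \<zeta> - poly P \<zeta>" "poly P \<zeta> - \<phi> \<zeta>"]
      by (simp add: norm_minus_commute)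
    also have "\<dots> < \<epsilon>"
    proof -
      have "cmod (poly P \<zeta> - poly (tq t) \<zeta>) < \<epsilon> / 2" using L z1 by (simp add: tq_def t_def)
      moreover have "cmod (\<phi> \<zeta> - poly P \<zeta>) < \<epsilon> / 2" using P z by blast
      ultimately show ?thesis by simp
    qed
    finally show "cmod (poly (tq t) \<zeta> - \<phi> \<zeta>) < \<epsilon>" .
  qed
  ultimately show ?thesis by blast
qed

lemma sum_zero_tail:
  fixes M N :: nat
  assumes "M \<le> N" "\<And>k. M \<le> k \<Longrightarrow> k < N \<Longrightarrow> f k = 0"
  shows "(\<Sum>k<N. f k) = (\<Sum>k<M. f k)"
proof (rule sum.mono_neutral_right)
  show "\<forall>i\<in>{..<N} - {..<M}. f i = 0"
  proof
    fix i assume "i \<in> {..<N} - {..<M}"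
    then show "f i = 0" using assms(2)[of i] by auto
  qed
qed (use assms(1) in auto)

lemma sum_shift_if:
  fixes D n :: nat
  shows "(\<Sum>k<D + n. (if D \<le> k then f (k - D) else 0)) = (\<Sum>i<n. f i)"
proof (induction n)
  case 0
  have "(\<Sum>k<D. (if D \<le> k then f (k - D) else 0)) = 0" by (intro sum.neutral) auto
  then show ?case by simp
next
  case (Suc n)
  have "(\<Sum>k<D + Suc n. (if D \<le> k then f (k - D) else 0)) =
        (\<Sum>k<D + n. (if D \<le> k then f (k - D) else 0)) + f n"
    by simp
  then show ?case using Suc by simp
qed

lemma geom_half_sum:
  assumes "a \<le> m"
  shows "(\<Sum>i\<in>{a..<m}. (1/2::real) ^ i) = 2 * ((1/2) ^ a - (1/2) ^ m)"
  using assms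
proof (induction m rule: dec_induct)
  case base then show ?case by simp
next
  case (step m)
  have "{a..<Suc m} = insert m {a..<m}" using step.hyps by auto
  then have "(\<Sum>i\<in>{a..<Suc m}. (1/2::real) ^ i) = (1/2) ^ m + (\<Sum>i\<in>{a..<m}. (1/2::real) ^ i)" by simp
  then show ?case using step.IH by simp
qed

lemma sum_split_at:
  fixes M N :: nat
  assumes "M \<le> N"
  shows "(\<Sum>k<N. f k) = (\<Sum>k<M. f k) + (\<Sum>k\<in>{M..<N}. f k)"
  using assms
proof (induction N rule: dec_induct)
  case base then show ?case by simp
next
  case (step N)
  have "{M..<Suc N} = insert N {M..<N}" using step.hyps by auto
  then show ?case using step by (simp add: add_ac)
qed

definition eps :: "nat \<Rightarrow> real" where "eps j = (1/2) ^ j"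

lemma eps_pos: "eps j > 0" and eps_le1: "eps j \<le> 1"
  by (auto simp: eps_def power_le_one)

lemma eps_sum: "(\<Sum>i\<in>{Suc j..<m}. eps i) \<le> eps j"
proof (cases "Suc j \<le> m")
  case True
  have "(\<Sum>i\<in>{Suc j..<m}. eps i) = 2 * ((1/2) ^ Suc j - (1/2) ^ m)"
    unfolding eps_def by (rule geom_half_sum[OF True])
  also have "\<dots> \<le> 2 * (1/2) ^ Suc j" by simp
  also have "\<dots> = eps j" by (simp add: eps_def)
  finally show ?thesis .
next
  case False then show ?thesis using eps_pos[of j] by simp
qed

context
  fixes r :: "nat \<Rightarrow> real" and \<gamma> :: "nat \<Rightarrow> real"
  assumes adm: "admissible_radii r" and gpos: "\<And>k. \<gamma> k > 0"
    and glim: "limsup (\<lambda>k. ereal (root k (\<gamma> k))) \<le> 1"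
begin

lemma r_inc: "incseq r" and r_nonneg: "0 \<le> r n" and r_lt1: "r n < 1" and r_lim: "r \<longlonglongrightarrow> 1"
  using adm by (auto simp: admissible_radii_def)

lemma gamma_conv_radius: "conv_radius \<gamma> \<ge> 1"
proof -
  define l where "l = limsup (\<lambda>n. ereal (root n (norm (\<gamma> n))))"
  have l1: "l \<le> 1" unfolding l_def using glim gpos by (simp add: abs_of_pos less_imp_le)
  have "0 = limsup (\<lambda>n. 0::ereal)" by (simp add: Limsup_const)
  also have "\<dots> \<le> l" unfolding l_def by (intro Limsup_mono) (simp_all add: real_root_ge_zero)
  finally have l0: "0 \<le> l" .
  have "inverse 1 \<le> inverse l" by (rule ereal_inverse_antimono[OF l0 l1])
  then show ?thesis by (simp add: conv_radius_def l_def)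
qed

lemma gamma_summable:
  assumes "0 \<le> t" "t < 1"
  shows "summable (\<lambda>k. \<gamma> k * t ^ k)"
proof -
  have "ereal (norm t) < conv_radius \<gamma>" using assms gamma_conv_radius
    by (metis ereal_less(3) less_ereal.simps(1) order_less_le_trans real_norm_def abs_of_nonneg)
  then show ?thesis by (rule summable_in_conv_radius)
qed

definition tail :: "real \<Rightarrow> nat \<Rightarrow> real" where
  "tail \<rho> D = (\<Sum>k. 2 * \<gamma> (k + D) * \<rho> ^ (k + D))"

lemma tail_small:
  assumes "0 \<le> \<rho>" "\<rho> < 1" "\<epsilon> > 0"
  shows "\<exists>D1\<ge>D. tail \<rho> D1 \<le> \<epsilon>"
proof -
  have "summable (\<lambda>k. 2 * (\<gamma> k * \<rho> ^ k))" using gamma_summable[OF assms(1,2)] by (rule summable_mult)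
  then obtain N where N: "\<forall>n\<ge>N. norm (\<Sum>i. 2 * (\<gamma> (i + n) * \<rho> ^ (i + n))) < \<epsilon>"
    using suminf_exist_split[OF assms(3)] by blast
  show ?thesis
  proof (intro exI[of _ "max D N"] conjI)
    have "norm (\<Sum>i. 2 * (\<gamma> (i + max D N) * \<rho> ^ (i + max D N))) < \<epsilon>" using N by simp
    then show "tail \<rho> (max D N) \<le> \<epsilon>" by (simp add: tail_def mult.assoc)
  qed simp
qed

lemma tail_bound:
  assumes "0 \<le> \<rho>" "\<rho> < 1"
  shows "(\<Sum>k\<in>{D1..<M}. 2 * \<gamma> k * \<rho> ^ k) \<le> tail \<rho> D1"
proof -
  have sm: "summable (\<lambda>k. 2 * \<gamma> (k + D1) * \<rho> ^ (k + D1))"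
  proof -
    have "summable (\<lambda>k. 2 * (\<gamma> k * \<rho> ^ k))" using gamma_summable[OF assms] by (rule summable_mult)
    then have "summable (\<lambda>k. 2 * (\<gamma> (k + D1) * \<rho> ^ (k + D1)))" by (rule summable_ignore_initial_segment)
    then show ?thesis by (simp add: mult.assoc)
  qed
  have "(\<Sum>k\<in>{D1..<M}. 2 * \<gamma> k * \<rho> ^ k) = (\<Sum>i\<in>{0..<M - D1}. 2 * \<gamma> (i + D1) * \<rho> ^ (i + D1))"
  proof (cases "D1 \<le> M")
    case True
    then show ?thesis using sum.shift_bounds_nat_ivl[of "\<lambda>k. 2 * \<gamma> k * \<rho> ^ k" 0 D1 "M - D1"] by simp
  next
    case False then show ?thesis by simp
  qed
  also have "\<dots> \<le> tail \<rho> D1" unfolding tail_def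
  proof (rule sum_le_suminf[OF sm])
    show "0 \<le> 2 * \<gamma> (n + D1) * \<rho> ^ (n + D1)" for n
      using gpos[of "n + D1"] assms by simp
  qed auto
  finally show ?thesis .
qed

definition nxt :: "nat \<Rightarrow> nat" where
  "nxt n = (LEAST m. n < m \<and> r n < r m)"

lemma nxt: "n < nxt n" "r n < r (nxt n)"
proof -
  have "eventually (\<lambda>m. r n < r m) sequentially"
    using r_lim r_lt1[of n] by (rule order_tendstoD)
  then obtain N where N: "\<forall>m\<ge>N. r n < r m" by (auto simp: eventually_sequentially)
  then have "\<exists>m. n < m \<and> r n < r m" by (intro exI[of _ "max N (Suc n)"]) auto
  then have "n < nxt n \<and> r n < r (nxt n)" unfolding nxt_def by (rule LeastI_ex)
  then show "n < nxt n" "r n < r (nxt n)" by auto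
qed

definition fill :: "(nat \<Rightarrow> complex) \<Rightarrow> nat \<Rightarrow> complex" where
  "fill b k = (if cmod (b k) < \<gamma> k then complex_of_real (2 * \<gamma> k) else 0)"

lemma fill_bound: "cmod (fill b k) \<le> 2 * \<gamma> k"
  using gpos[of k] by (simp add: fill_def)

lemma fill_lower: "cmod (b k + fill b k) \<ge> \<gamma> k"
proof (cases "cmod (b k) < \<gamma> k")
  case True
  have "2 * \<gamma> k - cmod (b k) \<le> cmod (b k + complex_of_real (2 * \<gamma> k))"
    using norm_triangle_ineq2[of "complex_of_real (2 * \<gamma> k)" "- b k"] gpos[of k]
    by (simp add: add.commute)
  then show ?thesis using True by (simp add: fill_def)
next
  case False then show ?thesis by (simp add: fill_def)
qed

definition D1sel :: "nat \<Rightarrow> real \<Rightarrow> nat \<Rightarrow> nat" where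
  "D1sel j \<rho> D = (SOME D1. D \<le> D1 \<and> tail \<rho> D1 \<le> eps j)"

definition Fsum :: "(nat \<Rightarrow> complex) \<Rightarrow> nat \<Rightarrow> complex \<Rightarrow> complex" where
  "Fsum b D1 z = (\<Sum>k<D1. (b k + fill b k) * z ^ k)"

definition gtgt :: "nat \<Rightarrow> (nat \<Rightarrow> complex) \<Rightarrow> nat \<Rightarrow> nat \<Rightarrow> complex \<Rightarrow> complex" where
  "gtgt j b n D1 \<zeta> = (poly (tq (task j)) \<zeta> - Fsum b D1 (of_real (r (nxt n)) * \<zeta>)) / (of_real (r (nxt n)) * \<zeta>) ^ D1"

definition Hsel :: "nat \<Rightarrow> (nat \<Rightarrow> complex) \<Rightarrow> nat \<Rightarrow> nat \<Rightarrow> complex poly" where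
  "Hsel j b n D1 = (SOME H. (\<forall>z\<in>cball 0 (r n). cmod (poly H z) \<le> eps j) \<and>
      (\<forall>\<zeta>\<in>tK (task j). cmod (poly H (of_real (r (nxt n)) * \<zeta>) - gtgt j b n D1 \<zeta>) \<le> eps j))"

primrec st :: "nat \<Rightarrow> (nat \<Rightarrow> complex) \<times> nat \<times> nat" where
  "st 0 = (\<lambda>k. 0, 0, 0)"
| "st (Suc j) = (case st j of (b, D, n) \<Rightarrow>
      (let D1 = D1sel j (r (nxt n)) D; H = Hsel j b n D1 in
        (\<lambda>k. b k + (if D1 \<le> k then coeff H (k - D1) else 0), D1 + Suc (degree H), nxt n)))"

definition "Bs j = fst (st j)"
definition "Ds j = fst (snd (st j))"
definition "Ns j = snd (snd (st j))"
definition "D1s j = D1sel j (r (nxt (Ns j))) (Ds j)"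
definition "Hs j = Hsel j (Bs j) (Ns j) (D1s j)"

lemma st0: "Bs 0 = (\<lambda>k. 0)" "Ds 0 = 0" "Ns 0 = 0"
  by (simp_all add: Bs_def Ds_def Ns_def)

lemma st_Suc:
  "Bs (Suc j) = (\<lambda>k. Bs j k + (if D1s j \<le> k then coeff (Hs j) (k - D1s j) else 0))"
  "Ds (Suc j) = D1s j + Suc (degree (Hs j))"
  "Ns (Suc j) = nxt (Ns j)"
proof -
  obtain b D n where stj: "st j = (b, D, n)" by (cases "st j") auto
  have "st (Suc j) = (\<lambda>k. b k + (if D1sel j (r (nxt n)) D \<le> k then coeff (Hsel j b n (D1sel j (r (nxt n)) D)) (k - D1sel j (r (nxt n)) D) else 0),
      D1sel j (r (nxt n)) D + Suc (degree (Hsel j b n (D1sel j (r (nxt n)) D))), nxt n)"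
    by (simp only: st.simps stj prod.case Let_def)
  moreover have "Bs j = b" "Ds j = D" "Ns j = n" by (simp_all add: Bs_def Ds_def Ns_def stj)
  ultimately show "Bs (Suc j) = (\<lambda>k. Bs j k + (if D1s j \<le> k then coeff (Hs j) (k - D1s j) else 0))"
    "Ds (Suc j) = D1s j + Suc (degree (Hs j))"
    "Ns (Suc j) = nxt (Ns j)"
    by (simp_all only: Bs_def[of "Suc j"] Ds_def[of "Suc j"] Ns_def[of "Suc j"] D1s_def Hs_def fst_conv snd_conv)
qed

lemma Ns_Suc: "Ns j < Ns (Suc j)" "r (Ns j) < r (Ns (Suc j))"
  using nxt[of "Ns j"] by (simp_all add: st_Suc)

lemma Ns_mono: "strict_mono Ns"
  using Ns_Suc(1) by (rule strict_mono_Suc_iff[THEN iffD2, rule_format])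

lemma r_Ns_mono: "i \<le> j \<Longrightarrow> r (Ns i) \<le> r (Ns j)"
  using Ns_mono r_inc by (simp add: incseq_def strict_mono_less_eq)

lemma Ns_ge: "j \<le> Ns j"
  using Ns_mono by (rule strict_mono_imp_increasing)

lemma D1s: "Ds j \<le> D1s j" "tail (r (Ns (Suc j))) (D1s j) \<le> eps j"
proof -
  have "\<exists>D1. Ds j \<le> D1 \<and> tail (r (nxt (Ns j))) D1 \<le> eps j"
    using tail_small[OF r_nonneg r_lt1 eps_pos] by blast
  then have "Ds j \<le> D1s j \<and> tail (r (nxt (Ns j))) (D1s j) \<le> eps j"
    unfolding D1s_def D1sel_def by (rule someI_ex)
  then show "Ds j \<le> D1s j" "tail (r (Ns (Suc j))) (D1s j) \<le> eps j" by (simp_all add: st_Suc)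
qed

lemma Ds_Suc: "D1s j < Ds (Suc j)" "Ds j < Ds (Suc j)"
  using D1s(1)[of j] by (simp_all add: st_Suc)

lemma Ds_mono: "strict_mono Ds"
  using Ds_Suc(2) by (rule strict_mono_Suc_iff[THEN iffD2, rule_format])

lemma Ds_le: "i \<le> j \<Longrightarrow> Ds i \<le> Ds j"
  using Ds_mono by (simp add: strict_mono_less_eq)

lemma Ds_ge: "j \<le> Ds j"
  using Ds_mono by (rule strict_mono_imp_increasing)

abbreviation "rho j \<equiv> r (Ns (Suc j))"

lemma rho_props: "0 < rho j" "rho j < 1" "r (Ns j) < rho j"
  using Ns_Suc(2)[of j] r_nonneg[of "Ns j"] r_lt1 by auto

lemma Hs:
  "\<forall>z\<in>cball 0 (r (Ns j)). cmod (poly (Hs j) z) \<le> eps j"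
  "\<forall>\<zeta>\<in>tK (task j). cmod (poly (Hs j) (of_real (rho j) * \<zeta>) - gtgt j (Bs j) (Ns j) (D1s j) \<zeta>) \<le> eps j"
proof -
  let ?\<rho> = "r (nxt (Ns j))"
  have rho: "?\<rho> = rho j" by (simp add: st_Suc)
  have cont: "continuous_on (tK (task j)) (gtgt j (Bs j) (Ns j) (D1s j))"
  proof -
    have nz: "(of_real ?\<rho> * \<zeta>) ^ D1s j \<noteq> 0" if "\<zeta> \<in> tK (task j)" for \<zeta>
    proof -
      have "\<zeta> \<noteq> 0" using that tK_props(2)[of "task j"] by auto
      moreover have "?\<rho> \<noteq> 0" using rho_props(1)[of j] rho by simp
      ultimately show ?thesis by simp
    qed
    have z0: "0 \<notin> tK (task j)" using tK_props(2)[of "task j"] by auto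
    have r0: "r (nxt (Ns j)) \<noteq> 0" using rho_props(1)[of j] rho by simp
    show ?thesis unfolding gtgt_def[abs_def] Fsum_def
      by (intro continuous_intros) (use z0 r0 in auto)
  qed
  have "\<exists>H. (\<forall>z\<in>cball 0 (r (Ns j)). cmod (poly H z) \<le> eps j) \<and>
      (\<forall>\<zeta>\<in>tK (task j). cmod (poly H (of_real ?\<rho> * \<zeta>) - gtgt j (Bs j) (Ns j) (D1s j) \<zeta>) \<le> eps j)"
    by (rule runge_step[OF r_nonneg _ _ tK_props cont eps_pos]) (use rho rho_props[of j] in auto)
  then have "(\<forall>z\<in>cball 0 (r (Ns j)). cmod (poly (Hs j) z) \<le> eps j) \<and>
      (\<forall>\<zeta>\<in>tK (task j). cmod (poly (Hs j) (of_real ?\<rho> * \<zeta>) - gtgt j (Bs j) (Ns j) (D1s j) \<zeta>) \<le> eps j)"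
    unfolding Hs_def Hsel_def by (rule someI_ex)
  then show "\<forall>z\<in>cball 0 (r (Ns j)). cmod (poly (Hs j) z) \<le> eps j"
    "\<forall>\<zeta>\<in>tK (task j). cmod (poly (Hs j) (of_real (rho j) * \<zeta>) - gtgt j (Bs j) (Ns j) (D1s j) \<zeta>) \<le> eps j"
    using rho by auto
qed

lemma Bs_zero: "Ds j \<le> k \<Longrightarrow> Bs j k = 0"
proof (induction j arbitrary: k)
  case 0 then show ?case by (simp add: st0)
next
  case (Suc j)
  have "Bs j k = 0" using Suc Ds_Suc(2)[of j] by simp
  moreover have "coeff (Hs j) (k - D1s j) = 0"
    using Suc.prems by (intro coeff_eq_0) (simp add: st_Suc)
  ultimately show ?case by (simp add: st_Suc)
qed

lemma Bs_Suc_low: "k < D1s j \<Longrightarrow> Bs (Suc j) k = Bs j k"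
  by (simp add: st_Suc)

lemma Bs_stable: "i \<le> j \<Longrightarrow> k < Ds i \<Longrightarrow> Bs j k = Bs i k"
proof (induction j rule: dec_induct)
  case base then show ?case by simp
next
  case (step j)
  have "k < D1s j" using step.prems Ds_le[OF step.hyps(1)] D1s(1)[of j] by simp
  then show ?case using step by (simp add: Bs_Suc_low)
qed

definition "Bf k = Bs (Suc k) k"

lemma Bf_eq: "k < Ds j \<Longrightarrow> Bf k = Bs j k"
proof -
  assume k: "k < Ds j"
  define m where "m = max j (Suc k)"
  have "Bs m k = Bs j k" using k by (intro Bs_stable) (auto simp: m_def)
  moreover have "Bs m k = Bs (Suc k) k"
    using Ds_ge[of "Suc k"] by (intro Bs_stable) (auto simp: m_def)
  ultimately show ?thesis by (simp add: Bf_def)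
qed

lemma Bf_eq2: "k < D1s j \<Longrightarrow> Bf k = Bs j k"
  using Bf_eq[of k "Suc j"] Ds_Suc(1)[of j] Bs_Suc_low by simp

definition "af k = Bf k + fill Bf k"

lemma af_lower: "cmod (af k) \<ge> \<gamma> k"
  unfolding af_def by (rule fill_lower)

definition "G m z = (\<Sum>k<Ds m. Bs m k * z ^ k)"

lemma G_low: "G j z = (\<Sum>k<D1s j. Bs j k * z ^ k)"
  unfolding G_def using D1s(1)[of j] by (intro sum_zero_tail[symmetric]) (auto simp: Bs_zero)

lemma G_Suc: "G (Suc j) z = G j z + z ^ D1s j * poly (Hs j) z"
proof -
  have "G (Suc j) z = (\<Sum>k<Ds (Suc j). Bs j k * z ^ k)
      + (\<Sum>k<Ds (Suc j). (if D1s j \<le> k then coeff (Hs j) (k - D1s j) else 0) * z ^ k)"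
    unfolding G_def by (simp add: st_Suc(1) distrib_right sum.distrib)
  also have "(\<Sum>k<Ds (Suc j). Bs j k * z ^ k) = G j z"
    unfolding G_def using Ds_Suc(2)[of j] by (intro sum_zero_tail) (auto simp: Bs_zero)
  also have "(\<Sum>k<Ds (Suc j). (if D1s j \<le> k then coeff (Hs j) (k - D1s j) else 0) * z ^ k)
      = (\<Sum>k<D1s j + Suc (degree (Hs j)). (if D1s j \<le> k then coeff (Hs j) (k - D1s j) * z ^ (k - D1s j + D1s j) else 0))"
    unfolding st_Suc(2) by (intro sum.cong refl) auto
  also have "\<dots> = (\<Sum>i<Suc (degree (Hs j)). coeff (Hs j) i * z ^ (i + D1s j))"
    by (rule sum_shift_if)
  also have "\<dots> = z ^ D1s j * poly (Hs j) z"
    by (simp add: poly_altdef lessThan_Suc_atMost sum_distrib_left power_add algebra_simps)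
  finally show ?thesis .
qed

lemma G_Bf: "(\<Sum>k<Ds m. Bf k * z ^ k) = G m z"
  unfolding G_def by (intro sum.cong) (auto simp: Bf_eq)

lemma G_upto: "Suc j \<le> m \<Longrightarrow> G m z = G (Suc j) z + (\<Sum>i\<in>{Suc j..<m}. z ^ D1s i * poly (Hs i) z)"
proof (induction m rule: dec_induct)
  case base then show ?case by simp
next
  case (step m)
  have "{Suc j..<Suc m} = insert m {Suc j..<m}" using step.hyps by auto
  then show ?case using step by (simp add: G_Suc add.assoc)
qed


lemma block: "\<exists>m. Ds m \<le> k \<and> k < Ds (Suc m)"
proof -
  have ex: "\<exists>m. k < Ds m" using Ds_ge[of "Suc k"] by (intro exI[of _ "Suc k"]) simp
  define m' where "m' = (LEAST m. k < Ds m)"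
  have m': "k < Ds m'" unfolding m'_def by (rule LeastI_ex[OF ex])
  have "m' \<noteq> 0"
  proof
    assume "m' = 0"
    then show False using m' st0(2) by simp
  qed
  then obtain m where m: "m' = Suc m" by (cases m') auto
  have "\<not> k < Ds m" using not_less_Least[of m "\<lambda>m. k < Ds m"] m unfolding m'_def by auto
  then show ?thesis using m m' by (intro exI[of _ m]) auto
qed

lemma Bf_block: "Ds m \<le> k \<Longrightarrow> k < Ds (Suc m) \<Longrightarrow> Bf k = (if D1s m \<le> k then coeff (Hs m) (k - D1s m) else 0)"
  using Bf_eq[of k "Suc m"] Bs_zero[of m k] by (simp add: st_Suc(1))

lemma Bf_bound:
  assumes t: "0 < t" "t \<le> 1" "t \<le> r (Ns m)" and k: "Ds m \<le> k" "k < Ds (Suc m)"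
  shows "cmod (Bf k) \<le> (1 / t) ^ k"
proof (cases "D1s m \<le> k")
  case True
  have R: "r (Ns m) > 0" using t by simp
  have "cmod (coeff (Hs m) (k - D1s m)) \<le> eps m / r (Ns m) ^ (k - D1s m)"
    by (rule poly_coeff_bound[OF R Hs(1)])
  also have "\<dots> \<le> 1 / t ^ (k - D1s m)"
    using eps_le1[of m] eps_pos[of m] t by (intro frac_le power_mono) auto
  also have "\<dots> \<le> 1 / t ^ k"
  proof (rule divide_left_mono)
    show "t ^ k \<le> t ^ (k - D1s m)" by (rule power_decreasing) (use t in auto)
  qed (use t in auto)
  also have "\<dots> = (1 / t) ^ k" by (simp add: power_one_over)
  finally show ?thesis using Bf_block[OF k] True by simp
next
  case False then show ?thesis using Bf_block[OF k] t by simp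
qed

lemma af_summable_norm:
  assumes z: "cmod z < 1"
  shows "summable (\<lambda>k. norm (af k * z ^ k))"
proof -
  define t where "t = (1 + cmod z) / 2"
  have t: "cmod z < t" "t < 1" "0 < t" using z by (auto simp: t_def add_pos_nonneg)
  have "eventually (\<lambda>n. t < r n) sequentially" using r_lim t(2) by (rule order_tendstoD)
  then obtain N where N: "\<forall>n\<ge>N. t < r n" by (auto simp: eventually_sequentially)
  have rN: "t \<le> r (Ns m)" if "N \<le> m" for m
    using N Ns_ge[of m] that by (meson le_trans less_imp_le)
  have s1: "summable (\<lambda>k. norm (Bf k * z ^ k))"
  proof (rule summable_comparison_test')
    show "summable (\<lambda>k. (cmod z / t) ^ k)" using t z by (intro summable_geometric) (simp add: divide_less_eq)
    fix k assume k: "Ds N \<le> k"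
    obtain m where m: "Ds m \<le> k" "k < Ds (Suc m)" using block by blast
    have "N \<le> m"
    proof (rule ccontr)
      assume "\<not> N \<le> m"
      then have "Ds (Suc m) \<le> Ds N" by (intro Ds_le) simp
      then show False using m k by simp
    qed
    then have "cmod (Bf k) \<le> (1 / t) ^ k" using Bf_bound[OF t(3) _ rN m] t by simp
    then have "cmod (Bf k) * cmod z ^ k \<le> (1 / t) ^ k * cmod z ^ k" by (rule mult_right_mono) simp
    also have "\<dots> = (cmod z / t) ^ k" by (simp add: power_divide)
    finally show "norm (norm (Bf k * z ^ k)) \<le> (cmod z / t) ^ k" by (simp add: norm_mult norm_power)
  qed
  have s2: "summable (\<lambda>k. 2 * (\<gamma> k * cmod z ^ k))"
    by (intro summable_mult gamma_summable) (use z in auto)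
  show ?thesis
  proof (rule summable_comparison_test'[OF summable_add[OF s1 s2], where N=0])
    fix k :: nat
    have "norm (af k * z ^ k) \<le> norm (Bf k * z ^ k) + norm (fill Bf k * z ^ k)"
      unfolding af_def by (simp add: distrib_right norm_triangle_ineq)
    also have "norm (fill Bf k * z ^ k) \<le> 2 * (\<gamma> k * cmod z ^ k)"
    proof -
      have "cmod (fill Bf k) * cmod z ^ k \<le> (2 * \<gamma> k) * cmod z ^ k"
        by (rule mult_right_mono[OF fill_bound]) simp
      then show ?thesis by (simp add: norm_mult norm_power mult.assoc)
    qed
    finally show "norm (norm (af k * z ^ k)) \<le> norm (Bf k * z ^ k) + 2 * (\<gamma> k * cmod z ^ k)" by simp
  qed
qed

lemma af_conv: "conv_radius af \<ge> 1"
proof (rule conv_radius_geI_ex')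
  fix t :: real assume "0 < t" "ereal t < 1"
  then have "cmod (complex_of_real t) < 1" by simp
  then show "summable (\<lambda>n. af n * complex_of_real t ^ n)"
    by (rule summable_norm_cancel[OF af_summable_norm])
qed

definition "ff = eval_fps (Abs_fps af)"

lemma ff_sums: "cmod z < 1 \<Longrightarrow> (\<lambda>k. af k * z ^ k) sums ff z"
  unfolding ff_def eval_fps_def by (simp add: summable_sums summable_norm_cancel[OF af_summable_norm])

lemma ff_holo: "ff holomorphic_on ball 0 1"
proof -
  have c: "1 \<le> fps_conv_radius (Abs_fps af)" using af_conv by (simp add: fps_conv_radius_def)
  have "ball (0::complex) 1 \<subseteq> eball 0 (fps_conv_radius (Abs_fps af))"
  proof
    fix z :: complex assume "z \<in> ball 0 1"
    then have "ereal (dist 0 z) < 1" by simp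
    then have "ereal (dist 0 z) < fps_conv_radius (Abs_fps af)" using c by (rule less_le_trans)
    then show "z \<in> eball 0 (fps_conv_radius (Abs_fps af))" by (simp add: eball_def)
  qed
  then show ?thesis unfolding ff_def by (rule holomorphic_on_eval_fps)
qed

lemma approx_task:
  assumes \<zeta>: "\<zeta> \<in> tK (task j)"
  shows "cmod (ff (of_real (rho j) * \<zeta>) - poly (tq (task j)) \<zeta>) \<le> 3 * eps j"
proof -
  define w where "w = complex_of_real (rho j) * \<zeta>"
  define q where "q = poly (tq (task j)) \<zeta>"
  have z1: "cmod \<zeta> = 1" using \<zeta> tK_props(2)[of "task j"] by auto
  have nw: "cmod w = rho j" using z1 rho_props[of j] by (simp add: w_def norm_mult)
  have w1: "cmod w < 1" using nw rho_props[of j] by simp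
  have w0: "w \<noteq> 0" using nw rho_props[of j] by auto
  define S where "S = (\<lambda>m. \<Sum>k<Ds m. af k * w ^ k)"
  have "(\<lambda>n. \<Sum>k<n. af k * w ^ k) \<longlonglongrightarrow> ff w" using ff_sums[OF w1] by (simp add: sums_def)
  from LIMSEQ_subseq_LIMSEQ[OF this Ds_mono] have lim: "S \<longlonglongrightarrow> ff w"
    by (simp add: S_def o_def)
  have bound: "cmod (S m - q) \<le> 3 * eps j" if m: "Suc j \<le> m" for m
  proof -
    have D1m: "D1s j \<le> Ds m" using Ds_Suc(1)[of j] Ds_le[OF m] by simp
    have Sm: "S m = G m w + (\<Sum>k<Ds m. fill Bf k * w ^ k)"
      unfolding S_def af_def by (simp add: distrib_right sum.distrib G_Bf)
    have fillsplit: "(\<Sum>k<Ds m. fill Bf k * w ^ k) = (\<Sum>k<D1s j. fill Bf k * w ^ k) + (\<Sum>k\<in>{D1s j..<Ds m}. fill Bf k * w ^ k)"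
      by (rule sum_split_at[OF D1m])
    have fillj: "fill (Bs j) k = fill Bf k" if "k < D1s j" for k
      using Bf_eq2[OF that] by (simp add: fill_def)
    have Fs: "Fsum (Bs j) (D1s j) w = G j w + (\<Sum>k<D1s j. fill Bf k * w ^ k)"
      unfolding Fsum_def G_low by (simp add: distrib_right sum.distrib fillj)
    have Gm: "G m w = G j w + w ^ D1s j * poly (Hs j) w + (\<Sum>i\<in>{Suc j..<m}. w ^ D1s i * poly (Hs i) w)"
      using G_upto[OF m] G_Suc by simp
    have rr: "r (nxt (Ns j)) = rho j" by (simp add: st_Suc)
    have gt: "gtgt j (Bs j) (Ns j) (D1s j) \<zeta> = (q - Fsum (Bs j) (D1s j) w) / w ^ D1s j"
      unfolding gtgt_def w_def q_def rr ..
    define T1 where "T1 = w ^ D1s j * (poly (Hs j) w - gtgt j (Bs j) (Ns j) (D1s j) \<zeta>)"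
    define T2 where "T2 = (\<Sum>i\<in>{Suc j..<m}. w ^ D1s i * poly (Hs i) w)"
    define T3 where "T3 = (\<Sum>k\<in>{D1s j..<Ds m}. fill Bf k * w ^ k)"
    have decomp: "S m - q = T1 + T2 + T3"
      unfolding Sm fillsplit Gm T1_def T2_def T3_def gt using w0
      by (simp add: Fs field_simps)
    have b1: "cmod T1 \<le> eps j"
    proof -
      have "cmod T1 = cmod w ^ D1s j * cmod (poly (Hs j) w - gtgt j (Bs j) (Ns j) (D1s j) \<zeta>)"
        by (simp add: T1_def norm_mult norm_power)
      also have "\<dots> \<le> 1 * eps j"
        using Hs(2)[of j] \<zeta> w1 nw rho_props[of j]
        by (intro mult_mono) (auto simp: w_def power_le_one less_imp_le)
      finally show ?thesis by simp
    qed
    have b2: "cmod T2 \<le> eps j"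
    proof -
      have "cmod T2 \<le> (\<Sum>i\<in>{Suc j..<m}. eps i)"
        unfolding T2_def
      proof (rule sum_norm_le)
        fix i assume i: "i \<in> {Suc j..<m}"
        have wi: "w \<in> cball 0 (r (Ns i))"
          using r_Ns_mono[of "Suc j" i] i nw by auto
        have "cmod (w ^ D1s i * poly (Hs i) w) = cmod w ^ D1s i * cmod (poly (Hs i) w)"
          by (simp add: norm_mult norm_power)
        also have "\<dots> \<le> 1 * eps i"
          using Hs(1)[of i] wi w1 by (intro mult_mono) (auto simp: power_le_one)
        finally show "cmod (w ^ D1s i * poly (Hs i) w) \<le> eps i" by simp
      qed
      also have "\<dots> \<le> eps j" by (rule eps_sum)
      finally show ?thesis .
    qed
    have b3: "cmod T3 \<le> eps j"
    proof -
      have "cmod T3 \<le> (\<Sum>k\<in>{D1s j..<Ds m}. 2 * \<gamma> k * rho j ^ k)"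
        unfolding T3_def
      proof (rule sum_norm_le)
        fix k
        have "cmod (fill Bf k * w ^ k) = cmod (fill Bf k) * rho j ^ k" by (simp add: norm_mult norm_power nw)
        also have "\<dots> \<le> 2 * \<gamma> k * rho j ^ k"
          using fill_bound[of Bf k] rho_props[of j] by (intro mult_right_mono) auto
        finally show "cmod (fill Bf k * w ^ k) \<le> 2 * \<gamma> k * rho j ^ k" .
      qed
      also have "\<dots> \<le> tail (rho j) (D1s j)"
        using rho_props[of j] by (intro tail_bound) auto
      also have "\<dots> \<le> eps j" by (rule D1s(2))
      finally show ?thesis .
    qed
    have "cmod (S m - q) \<le> cmod T1 + cmod T2 + cmod T3"
      unfolding decomp by (metis norm_triangle_ineq add_mono order_trans order_refl)
    then show ?thesis using b1 b2 b3 by simp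
  qed
  have "(\<lambda>m. cmod (S m - q)) \<longlonglongrightarrow> cmod (ff w - q)"
    by (intro tendsto_norm tendsto_diff lim tendsto_const)
  then have "cmod (ff w - q) \<le> 3 * eps j"
    by (rule Lim_bounded[of _ _ "Suc j"]) (use bound in auto)
  then show ?thesis by (simp add: w_def q_def)
qed

lemma approx_any:
  assumes K: "compact K" "K \<subseteq> sphere 0 1" "K \<noteq> sphere 0 1" and phi: "continuous_on K \<phi>" and e: "\<epsilon> > 0"
  shows "\<exists>j\<ge>M. \<forall>\<zeta>\<in>K. cmod (ff (of_real (rho j) * \<zeta>) - \<phi> \<zeta>) < \<epsilon>"
proof -
  obtain t where t: "K \<subseteq> tK t" "\<forall>\<zeta>\<in>K. cmod (poly (tq t) \<zeta> - \<phi> \<zeta>) < \<epsilon> / 2"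
    using task_cover[OF K phi, of "\<epsilon>/2"] e by auto
  obtain M' where M': "(1/2::real) ^ M' < \<epsilon> / 6" using real_pow_small[of "1/2" "\<epsilon>/6"] e by auto
  obtain j where j: "max M M' \<le> j" "task j = t" using task_infinitely_often by blast
  have ej: "eps j \<le> eps M'" unfolding eps_def by (rule power_decreasing) (use j in auto)
  show ?thesis
  proof (intro exI[of _ j] conjI ballI)
    show "M \<le> j" using j by simp
    fix \<zeta> assume z: "\<zeta> \<in> K"
    have a1: "cmod (ff (of_real (rho j) * \<zeta>) - poly (tq t) \<zeta>) \<le> 3 * eps j"
      using approx_task[of \<zeta> j] z t j by auto
    have a2: "cmod (poly (tq t) \<zeta> - \<phi> \<zeta>) < \<epsilon> / 2" using t z by blast
    have "cmod (ff (of_real (rho j) * \<zeta>) - \<phi> \<zeta>) \<le> cmod (ff (of_real (rho j) * \<zeta>) - poly (tq t) \<zeta>) + cmod (poly (tq t) \<zeta> - \<phi> \<zeta>)"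
      using norm_triangle_ineq[of "ff (of_real (rho j) * \<zeta>) - poly (tq t) \<zeta>" "poly (tq t) \<zeta> - \<phi> \<zeta>"] by simp
    also have "\<dots> < \<epsilon>"
    proof -
      have "eps M' < \<epsilon> / 6" using M' by (simp add: eps_def)
      then have "3 * eps j < \<epsilon> / 2" using ej by simp
      then show ?thesis using a1 a2 by simp
    qed
    finally show "cmod (ff (of_real (rho j) * \<zeta>) - \<phi> \<zeta>) < \<epsilon>" .
  qed
qed

lemma ff_universal: "abel_universal_rho r ff"
  unfolding abel_universal_rho_def
proof (intro conjI allI impI ff_holo)
  fix K :: "complex set" and \<phi> :: "complex \<Rightarrow> complex"
  assume A: "compact K \<and> K \<subseteq> sphere 0 1 \<and> K \<noteq> sphere 0 1 \<and> continuous_on K \<phi>"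
  define P where "P m j \<longleftrightarrow> (\<forall>\<zeta>\<in>K. cmod (ff (of_real (rho j) * \<zeta>) - \<phi> \<zeta>) < inverse (of_nat (Suc m)))" for m j
  have ex: "\<exists>j\<ge>M. P m j" for m M
    unfolding P_def using A by (intro approx_any) auto
  define js where "js = rec_nat (SOME j. P 0 j) (\<lambda>m jm. SOME j. j \<ge> Suc jm \<and> P (Suc m) j)"
  have js0: "js 0 = (SOME j. P 0 j)" and jsS: "js (Suc m) = (SOME j. j \<ge> Suc (js m) \<and> P (Suc m) j)" for m
    by (simp_all add: js_def)
  have jsP: "P m (js m) \<and> js m < js (Suc m)" for m
  proof -
    have "\<exists>j. j \<ge> Suc (js m) \<and> P (Suc m) j" using ex by blast
    then have "js (Suc m) \<ge> Suc (js m) \<and> P (Suc m) (js (Suc m))"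
      unfolding jsS by (rule someI_ex)
    moreover have "P m (js m)"
    proof (cases m)
      case 0
      have "\<exists>j. P 0 j" using ex by blast
      then have "P 0 (js 0)" unfolding js0 by (rule someI_ex)
      then show ?thesis using 0 by simp
    next
      case (Suc m')
      have "\<exists>j. j \<ge> Suc (js m') \<and> P (Suc m') j" using ex by blast
      then have "js (Suc m') \<ge> Suc (js m') \<and> P (Suc m') (js (Suc m'))"
        unfolding jsS by (rule someI_ex)
      then show ?thesis using Suc by simp
    qed
    ultimately show ?thesis by simp
  qed
  have jsm: "strict_mono js" using jsP by (intro strict_mono_Suc_iff[THEN iffD2]) auto
  define n where "n = (\<lambda>k. Ns (Suc (js k)))"
  have "strict_mono n"
  proof -
    have "strict_mono (Ns \<circ> (Suc \<circ> js))"
      by (intro strict_mono_o Ns_mono) (use jsm in \<open>auto simp: strict_mono_def\<close>)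
    then show ?thesis by (simp add: n_def o_def)
  qed
  moreover have "uniform_limit K (\<lambda>k \<zeta>. ff (complex_of_real (r (n k)) * \<zeta>)) \<phi> sequentially"
    unfolding uniform_limit_iff
  proof (intro allI impI)
    fix e :: real assume e: "e > 0"
    obtain m0 where m0: "inverse (of_nat (Suc m0)) < e" using reals_Archimedean[OF e] by blast
    show "\<forall>\<^sub>F k in sequentially. \<forall>\<zeta>\<in>K. dist (ff (complex_of_real (r (n k)) * \<zeta>)) (\<phi> \<zeta>) < e"
      unfolding eventually_sequentially
    proof (intro exI[of _ m0] allI impI ballI)
      fix k \<zeta> assume k: "m0 \<le> k" and z: "\<zeta> \<in> K"
      have "cmod (ff (of_real (rho (js k)) * \<zeta>) - \<phi> \<zeta>) < inverse (of_nat (Suc k))"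
        using jsP[of k] z unfolding P_def by blast
      also have "\<dots> \<le> inverse (of_nat (Suc m0))" using k by (simp add: field_simps)
      finally show "dist (ff (complex_of_real (r (n k)) * \<zeta>)) (\<phi> \<zeta>) < e"
        using m0 by (simp add: dist_norm n_def)
    qed
  qed
  ultimately show "\<exists>n. strict_mono n \<and> uniform_limit K (\<lambda>k \<zeta>. ff (complex_of_real (r (n k)) * \<zeta>)) \<phi> sequentially"
    by blast
qed

lemma main_construction:
  "\<exists>f a. abel_universal_rho r f \<and> (\<forall>z\<in>ball 0 1. (\<lambda>k. a k * z ^ k) sums f z) \<and> (\<forall>k. norm (a k) \<ge> \<gamma> k)"
  using ff_universal ff_sums af_lower by (intro exI[of _ ff] exI[of _ af]) auto

end

theorem theorem4p5:
  fixes r :: "nat \<Rightarrow> real"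
  assumes "admissible_radii r"
  shows "(\<forall>\<gamma> :: nat \<Rightarrow> real. (\<forall>k. \<gamma> k > 0) \<and>
            limsup (\<lambda>k. ereal (root k (\<gamma> k))) \<le> 1 \<longrightarrow>
            (\<exists>f a. abel_universal_rho r f \<and>
                   (\<forall>z\<in>ball 0 1. (\<lambda>k. a k * z ^ k) sums f z) \<and>
                   (\<forall>\<^sub>F k in sequentially. norm (a k) \<ge> \<gamma> k)))
         \<and> (\<exists>f a. abel_universal f \<and> (\<forall>z\<in>ball 0 1. (\<lambda>k. a k * z ^ k) sums f z) \<and>
                 conv_radius a = 1 \<and> \<not> has_HO_gaps a)"
proof
  show "\<forall>\<gamma> :: nat \<Rightarrow> real. (\<forall>k. \<gamma> k > 0) \<and>
            limsup (\<lambda>k. ereal (root k (\<gamma> k))) \<le> 1 \<longrightarrow>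
            (\<exists>f a. abel_universal_rho r f \<and>
                   (\<forall>z\<in>ball 0 1. (\<lambda>k. a k * z ^ k) sums f z) \<and>
                   (\<forall>\<^sub>F k in sequentially. norm (a k) \<ge> \<gamma> k))"
  proof (intro allI impI)
    fix \<gamma> :: "nat \<Rightarrow> real"
    assume g: "(\<forall>k. \<gamma> k > 0) \<and> limsup (\<lambda>k. ereal (root k (\<gamma> k))) \<le> 1"
    obtain f a where fa: "abel_universal_rho r f" "\<forall>z\<in>ball 0 1. (\<lambda>k. a k * z ^ k) sums f z"
      "\<forall>k. norm (a k) \<ge> \<gamma> k"
      using main_construction[OF assms, of \<gamma>] g by blast
    then show "\<exists>f a. abel_universal_rho r f \<and> (\<forall>z\<in>ball 0 1. (\<lambda>k. a k * z ^ k) sums f z) \<and>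
                   (\<forall>\<^sub>F k in sequentially. norm (a k) \<ge> \<gamma> k)"
      by (intro exI[of _ f] exI[of _ a]) (auto intro: always_eventually)
  qed
next
  define \<gamma>1 where "\<gamma>1 = (\<lambda>k::nat. 1::real)"
  have r1: "root k 1 \<le> 1" for k by (cases k) auto
  have lim1: "limsup (\<lambda>k. ereal (root k (\<gamma>1 k))) \<le> 1"
    by (rule Limsup_bounded) (auto simp: \<gamma>1_def r1 intro: always_eventually)
  obtain f a where fa: "abel_universal_rho r f" "\<forall>z\<in>ball 0 1. (\<lambda>k. a k * z ^ k) sums f z"
    "\<forall>k. norm (a k) \<ge> 1"
    using main_construction[OF assms, of \<gamma>1] lim1 by (auto simp: \<gamma>1_def)
  have univ: "abel_universal f" unfolding abel_universal_def using assms fa(1) by blast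
  have cr1: "conv_radius a \<ge> 1"
  proof (rule conv_radius_geI_ex')
    fix t :: real assume t: "0 < t" "ereal t < 1"
    then have "complex_of_real t \<in> ball 0 1" by simp
    then show "summable (\<lambda>n. a n * complex_of_real t ^ n)" using fa(2) sums_summable by blast
  qed
  have cr2: "conv_radius a \<le> 1"
  proof (rule ccontr)
    assume "\<not> conv_radius a \<le> 1"
    then have "ereal (norm (1::complex)) < conv_radius a" by (simp add: not_le one_ereal_def[symmetric])
    then have "summable (\<lambda>n. a n * 1 ^ n)" by (rule summable_in_conv_radius)
    then have "a \<longlonglongrightarrow> 0" using summable_LIMSEQ_zero by force
    then obtain N where "\<forall>n\<ge>N. norm (a n - 0) < 1" using LIMSEQ_D[of a 0 1] by auto
    then show False using fa(3) by (metis diff_zero le_refl not_le)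
  qed
  have nogaps: "\<not> has_HO_gaps a"
  proof
    assume "has_HO_gaps a"
    then obtain p q :: "nat \<Rightarrow> nat" where pq: "\<forall>k. p k < q k \<and> q k \<le> p (Suc k)"
      and L: "Limsup (inf sequentially (principal (\<Union>k. {p k <.. q k})))
               (\<lambda>k. ereal (root k (norm (a k)))) < 1"
      unfolding has_HO_gaps_def by blast
    define I where "I = (\<Union>k. {p k <.. q k})"
    define F where "F = inf sequentially (principal I)"
    have qI: "q k \<in> I" for k using pq unfolding I_def by auto
    have qmono: "strict_mono q"
    proof (rule strict_mono_Suc_iff[THEN iffD2], intro allI)
      fix k show "q k < q (Suc k)" using pq[rule_format, of k] pq[rule_format, of "Suc k"] by simp
    qed
    have Fnb: "F \<noteq> bot"
    proof
      assume "F = bot"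
      then have "eventually (\<lambda>x. False) F" by simp
      then have "eventually (\<lambda>x. x \<in> I \<longrightarrow> False) sequentially"
        unfolding F_def eventually_inf_principal .
      then obtain N where N: "\<forall>n\<ge>N. n \<notin> I" by (auto simp: eventually_sequentially)
      have "N \<le> q N" using qmono by (rule strict_mono_imp_increasing)
      then show False using N qI by blast
    qed
    have ev: "eventually (\<lambda>k. 1 \<le> ereal (root k (norm (a k)))) F"
      unfolding F_def eventually_inf_principal eventually_sequentially
    proof (intro exI[of _ 1] allI impI)
      fix k :: nat assume k: "1 \<le> k"
      have "root k 1 \<le> root k (norm (a k))" using k fa(3) by (intro real_root_le_mono) auto
      then show "1 \<le> ereal (root k (norm (a k)))" using k by simp
    qed
    have "1 \<le> Limsup F (\<lambda>k. ereal (root k (norm (a k))))" by (rule le_Limsup[OF Fnb ev])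
    then show False using L unfolding F_def I_def by simp
  qed
  show "\<exists>f a. abel_universal f \<and> (\<forall>z\<in>ball 0 1. (\<lambda>k. a k * z ^ k) sums f z) \<and>
                 conv_radius a = 1 \<and> \<not> has_HO_gaps a"
    using univ fa(2) cr1 cr2 nogaps by (intro exI[of _ f] exI[of _ a]) auto
qed

end
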